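(* Let $f\in C^1(\mathbb R)$ and let $X$ and $X^n$ ($n\ge1$) be cadlag processes which admit quadratic variations in the weak sense (along a common refining sequence, with $X^n-X$ and $f(X^n)-f(X)$ also admitting quadratic variations along it), respectively all in the strong sense. Assume $(X^n-X)^*_t\to0$ in probability and $[X^n-X]_t\to0$ in probability as $n\to\infty$. Then $[f(X^n)-f(X)]_t\to0$ in probability, the quadratic variation being in the weak (respectively strong) sense.
   Context: Fixed horizon $t>0$; filtered probability space with usual hypotheses. For a cadlag process $Y$, $Y^*_t=\sup_{s\le t}|Y_s|$. Weak sense: a refining sequence $\{D_k\}_k$ is a sequence of deterministic partitions of $[0,t]$ with mesh $\to0$; $X$ has weak-sense quadratic variation $[X]$ along it if $[X]_s=[X]^c_s+\sum_{u\le s}(\Delta X_u)^2$ with $[X]^c$ increasing continuous and $\sum_{t_i\in D_k,t_i\le s}(X_{t_{i+1}}-X_{t_i})^2\to[X]_s$ in probability for each $0<s\le t$. Strong sense: for a finite partition $P=\{\tau_0\le\dots\le\tau_n\}$ of $[0,t]$ by stopping times, with mesh $\|P\|=\max_i(\tau_i-\tau_{i-1})$, set $[X,Y]^P_s=\sum_{i=1}^n(X_{\tau_i\wedge s}-X_{\tau_{i-1}\wedge s})(Y_{\tau_i\wedge s}-Y_{\tau_{i-1}\wedge s})$; $X,Y$ admit a covariation in the strong sense if there is a finite variation process $[X,Y]$ with $\limsup_{\delta\to0}\sup_{\|P\|\le\delta}\mathbb P(([X,Y]^P-[X,Y])^*_t>\epsilon)=0$ for all $\epsilon>0$ (sup over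 stopping-time partitions of $[0,t]$); $X$ has a strong-sense quadratic variation if $X,X$ admit a strong-sense covariation, and $[X]=[X,X]$. *)

theory Defs
  imports "HOL-Analysis.Analysis" "HOL-Probability.Probability"
begin

text \<open>Processes are maps real \<Rightarrow> 'a \<Rightarrow> real (time, then outcome); only times in [0,t] matter.\<close>

definition usual_hypotheses :: "'a measure \<Rightarrow> (real \<Rightarrow> 'a measure) \<Rightarrow> bool" where
  "usual_hypotheses M F \<longleftrightarrow>
     filtration (space M) F \<and> (\<forall>s. sets (F s) \<subseteq> sets M) \<and>
     (\<forall>A \<in> null_sets M. \<forall>B. B \<subseteq> A \<longrightarrow> B \<in> sets (F 0)) \<and>
     (\<forall>s. sets (F s) = (\<Inter>r\<in>{s<..}. sets (F r)))"

definition cadlag_path :: "real \<Rightarrow> (real \<Rightarrow> real) \<Rightarrow> bool" where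
  "cadlag_path t g \<longleftrightarrow>
     (\<forall>s\<in>{0..<t}. (g \<longlongrightarrow> g s) (at_right s)) \<and>
     (\<forall>s\<in>{0<..t}. \<exists>l. (g \<longlongrightarrow> l) (at_left s))"

definition cadlag_process :: "'a measure \<Rightarrow> real \<Rightarrow> (real \<Rightarrow> 'a \<Rightarrow> real) \<Rightarrow> bool" where
  "cadlag_process M t Y \<longleftrightarrow> (\<forall>\<omega>\<in>space M. cadlag_path t (\<lambda>s. Y s \<omega>))"

definition adapted :: "(real \<Rightarrow> 'a measure) \<Rightarrow> real \<Rightarrow> (real \<Rightarrow> 'a \<Rightarrow> real) \<Rightarrow> bool" where
  "adapted F t Y \<longleftrightarrow> (\<forall>s\<in>{0..t}. Y s \<in> borel_measurable (F s))"

definition sup_abs :: "real \<Rightarrow> (real \<Rightarrow> 'a \<Rightarrow> real) \<Rightarrow> 'a \<Rightarrow> real" where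
  "sup_abs t Y \<omega> = (SUP s\<in>{0..t}. \<bar>Y s \<omega>\<bar>)"

definition conv_prob_zero :: "'a measure \<Rightarrow> (nat \<Rightarrow> 'a \<Rightarrow> real) \<Rightarrow> bool" where
  "conv_prob_zero M Z \<longleftrightarrow>
     (\<forall>\<epsilon>>0. (\<lambda>n. measure M {\<omega>\<in>space M. \<bar>Z n \<omega>\<bar> > \<epsilon>}) \<longlonglongrightarrow> 0)"

definition is_partition :: "real \<Rightarrow> real set \<Rightarrow> bool" where
  "is_partition t D \<longleftrightarrow> finite D \<and> D \<subseteq> {0..t} \<and> 0 \<in> D \<and> t \<in> D"

definition mesh :: "real set \<Rightarrow> real" where
  "mesh D = Sup {b - a | a b. a \<in> D \<and> b \<in> D \<and> a < b \<and> {a<..<b} \<inter> D = {}}"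

definition refining_sequence :: "real \<Rightarrow> (nat \<Rightarrow> real set) \<Rightarrow> bool" where
  "refining_sequence t D \<longleftrightarrow> (\<forall>k. is_partition t (D k)) \<and> (\<lambda>k. mesh (D k)) \<longlonglongrightarrow> 0"

definition succ_pt :: "real set \<Rightarrow> real \<Rightarrow> real" where
  "succ_pt D x = Min {y\<in>D. x < y}"

definition discrete_qv :: "real \<Rightarrow> real set \<Rightarrow> (real \<Rightarrow> 'a \<Rightarrow> real) \<Rightarrow> real \<Rightarrow> 'a \<Rightarrow> real" where
  "discrete_qv t D Y s \<omega> = (\<Sum>x\<in>{x\<in>D. x \<le> s \<and> x < t}. (Y (succ_pt D x) \<omega> - Y x \<omega>)\<^sup>2)"

definition jump :: "(real \<Rightarrow> 'a \<Rightarrow> real) \<Rightarrow> real \<Rightarrow> 'a \<Rightarrow> real" where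
  "jump Y u \<omega> = (if u \<le> 0 then 0 else Y u \<omega> - Lim (at_left u) (\<lambda>r. Y r \<omega>))"

definition weak_qv :: "'a measure \<Rightarrow> real \<Rightarrow> (nat \<Rightarrow> real set) \<Rightarrow> (real \<Rightarrow> 'a \<Rightarrow> real)
    \<Rightarrow> (real \<Rightarrow> 'a \<Rightarrow> real) \<Rightarrow> bool" where
  "weak_qv M t D Y Q \<longleftrightarrow>
     (\<forall>s\<in>{0..t}. Q s \<in> borel_measurable M) \<and>
     (\<exists>C. AE \<omega> in M. mono_on {0..t} (\<lambda>s. C s \<omega>) \<and> continuous_on {0..t} (\<lambda>s. C s \<omega>) \<and>
        (\<forall>s\<in>{0..t}. (\<lambda>u. (jump Y u \<omega>)\<^sup>2) summable_on {0..s} \<and>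
                     Q s \<omega> = C s \<omega> + (\<Sum>\<^sub>\<infinity>u\<in>{0..s}. (jump Y u \<omega>)\<^sup>2))) \<and>
     (\<forall>s\<in>{0<..t}. conv_prob_zero M (\<lambda>k \<omega>. discrete_qv t (D k) Y s \<omega> - Q s \<omega>))"

definition bounded_variation_on :: "real \<Rightarrow> real \<Rightarrow> (real \<Rightarrow> real) \<Rightarrow> bool" where
  "bounded_variation_on a b g \<longleftrightarrow>
     bdd_above {\<Sum>i<n. \<bar>g (p (Suc i)) - g (p i)\<bar> | n p.
                  p 0 = a \<and> p n = b \<and> (\<forall>i<n. p i \<le> p (Suc i))}"

definition fv_process :: "'a measure \<Rightarrow> (real \<Rightarrow> 'a measure) \<Rightarrow> real \<Rightarrow> (real \<Rightarrow> 'a \<Rightarrow> real) \<Rightarrow> bool" where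
  "fv_process M F t Q \<longleftrightarrow> adapted F t Q \<and> cadlag_process M t Q \<and>
     (\<forall>\<omega>\<in>space M. bounded_variation_on 0 t (\<lambda>s. Q s \<omega>))"

definition stopping_partition :: "'a measure \<Rightarrow> (real \<Rightarrow> 'a measure) \<Rightarrow> real \<Rightarrow> nat
    \<Rightarrow> (nat \<Rightarrow> 'a \<Rightarrow> real) \<Rightarrow> bool" where
  "stopping_partition M F t n \<tau> \<longleftrightarrow>
     (\<forall>i\<le>n. stopping_time F (\<tau> i)) \<and>
     (\<forall>\<omega>\<in>space M. \<tau> 0 \<omega> = 0 \<and> \<tau> n \<omega> = t \<and> (\<forall>i<n. \<tau> i \<omega> \<le> \<tau> (Suc i) \<omega>))"

definition mesh_le :: "'a measure \<Rightarrow> nat \<Rightarrow> (nat \<Rightarrow> 'a \<Rightarrow> real) \<Rightarrow> real \<Rightarrow> bool" where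
  "mesh_le M n \<tau> \<delta> \<longleftrightarrow> (\<forall>\<omega>\<in>space M. \<forall>i<n. \<tau> (Suc i) \<omega> - \<tau> i \<omega> \<le> \<delta>)"

definition cov_P :: "(real \<Rightarrow> 'a \<Rightarrow> real) \<Rightarrow> (real \<Rightarrow> 'a \<Rightarrow> real) \<Rightarrow> nat \<Rightarrow> (nat \<Rightarrow> 'a \<Rightarrow> real)
    \<Rightarrow> real \<Rightarrow> 'a \<Rightarrow> real" where
  "cov_P Y Z n \<tau> s \<omega> = (\<Sum>i\<in>{1..n}.
      (Y (min (\<tau> i \<omega>) s) \<omega> - Y (min (\<tau> (i - 1) \<omega>) s) \<omega>) *
      (Z (min (\<tau> i \<omega>) s) \<omega> - Z (min (\<tau> (i - 1) \<omega>) s) \<omega>))"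

text \<open>Q is a strong-sense covariation of Y and Z. The condition
  limsup_{delta->0} sup_{mesh P <= delta} P((...)^*_t > eps) = 0 is written out with epsilon/delta.\<close>
definition strong_cov :: "'a measure \<Rightarrow> (real \<Rightarrow> 'a measure) \<Rightarrow> real \<Rightarrow> (real \<Rightarrow> 'a \<Rightarrow> real)
    \<Rightarrow> (real \<Rightarrow> 'a \<Rightarrow> real) \<Rightarrow> (real \<Rightarrow> 'a \<Rightarrow> real) \<Rightarrow> bool" where
  "strong_cov M F t Y Z Q \<longleftrightarrow> fv_process M F t Q \<and>
     (\<forall>\<epsilon>>0. \<forall>\<eta>>0. \<exists>\<delta>>0. \<forall>n \<tau>. stopping_partition M F t n \<tau> \<and> mesh_le M n \<tau> \<delta> \<longrightarrow>
        measure M {\<omega>\<in>space M. sup_abs t (\<lambda>s \<omega>. cov_P Y Z n \<tau> s \<omega> - Q s \<omega>) \<omega> > \<epsilon>} \<le> \<eta>)"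

definition strong_qv :: "'a measure \<Rightarrow> (real \<Rightarrow> 'a measure) \<Rightarrow> real \<Rightarrow> (real \<Rightarrow> 'a \<Rightarrow> real)
    \<Rightarrow> (real \<Rightarrow> 'a \<Rightarrow> real) \<Rightarrow> bool" where
  "strong_qv M F t Y Q \<longleftrightarrow> strong_cov M F t Y Y Q"

end

theory Submission
  imports Defs
begin


lemma mvt_betw:
  fixes f f' :: "real \<Rightarrow> real"
  assumes d: "\<And>x. (f has_real_derivative f' x) (at x)"
  shows "\<exists>\<xi>. min a b \<le> \<xi> \<and> \<xi> \<le> max a b \<and> f b - f a = f' \<xi> * (b - a)"
proof (cases a b rule: linorder_cases)
  case less
  from MVT2[OF less, of f f'] d obtain z where "a < z" "z < b" "f b - f a = (b - a) * f' z" by blast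
  then show ?thesis by (intro exI[of _ z]) auto
next
  case equal then show ?thesis by auto
next
  case greater
  from MVT2[OF greater, of f f'] d obtain z where "b < z" "z < a" "f a - f b = (a - b) * f' z" by blast
  then show ?thesis by (intro exI[of _ z]) (auto simp: algebra_simps)
qed

lemma f_constants:
  fixes f :: "real \<Rightarrow> real"
  assumes C1: "f C1_differentiable_on UNIV" and K: "K > 0"
  shows "\<exists>A>0. \<forall>B>0. \<exists>\<rho>>0. \<forall>xa xb ya yb. \<bar>xa\<bar> \<le> K \<and> \<bar>xb\<bar> \<le> K \<and> \<bar>ya\<bar> \<le> \<rho> \<and> \<bar>yb\<bar> \<le> \<rho> \<longrightarrow>
      (f (xb + yb) - f xb - (f (xa + ya) - f xa))\<^sup>2 \<le> A * (yb - ya)\<^sup>2 + B * (xb - xa)\<^sup>2"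
proof -
  from C1 obtain f' where d0: "\<And>x. (f has_vector_derivative f' x) (at x)" and cf': "continuous_on UNIV f'"
    unfolding C1_differentiable_on_def by blast
  have d: "\<And>x. (f has_real_derivative f' x) (at x)"
    using d0 by (simp add: has_real_derivative_iff_has_vector_derivative)
  define S where "S = {-(K+1)..K+1}"
  have cS: "compact S" unfolding S_def by simp
  have cf'S: "continuous_on S f'" using cf' continuous_on_subset by blast
  have "bounded (f' ` S)" using compact_continuous_image[OF cf'S cS] compact_imp_bounded by blast
  then obtain L0 where L0: "\<And>u. u \<in> S \<Longrightarrow> \<bar>f' u\<bar> \<le> L0"
    unfolding bounded_iff by fastforce
  define L where "L = max L0 0"
  have L: "\<And>u. u \<in> S \<Longrightarrow> \<bar>f' u\<bar> \<le> L" and L_nn: "L \<ge> 0" using L0 unfolding L_def by force+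
  have uc: "uniformly_continuous_on S f'" using compact_uniformly_continuous[OF cf'S cS] .
  show ?thesis
  proof (rule exI[of _ "2 * L\<^sup>2 + 1"], rule conjI)
    show "2 * L\<^sup>2 + 1 > 0" by (simp add: add_nonneg_pos)
  next
    show "\<forall>B>0. \<exists>\<rho>>0. \<forall>xa xb ya yb. \<bar>xa\<bar> \<le> K \<and> \<bar>xb\<bar> \<le> K \<and> \<bar>ya\<bar> \<le> \<rho> \<and> \<bar>yb\<bar> \<le> \<rho> \<longrightarrow>
      (f (xb + yb) - f xb - (f (xa + ya) - f xa))\<^sup>2 \<le> (2 * L\<^sup>2 + 1) * (yb - ya)\<^sup>2 + B * (xb - xa)\<^sup>2"
    proof (intro allI impI)
    fix B :: real assume B: "B > 0"
    define \<theta> where "\<theta> = sqrt (B / 4)"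
    have th: "\<theta> > 0" "\<theta>\<^sup>2 = B / 4" using B unfolding \<theta>_def by auto
    from uc th(1) obtain dd where dd: "dd > 0" and ddp: "\<And>x x'. x \<in> S \<Longrightarrow> x' \<in> S \<Longrightarrow> dist x' x < dd \<Longrightarrow> dist (f' x') (f' x) < \<theta>"
      unfolding uniformly_continuous_on_def by metis
    define \<gamma> where "\<gamma> = dd / 3"
    have g: "\<gamma> > 0" "2 * \<gamma> < dd" using dd unfolding \<gamma>_def by auto
    define \<rho> where "\<rho> = min 1 (min \<gamma> (\<gamma> * sqrt B / (4 * L + 1)))"
    have rp: "\<rho> > 0" unfolding \<rho>_def using g B L_nn by (auto intro!: divide_pos_pos mult_pos_pos)
    have r1: "\<rho> \<le> 1" "\<rho> \<le> \<gamma>" unfolding \<rho>_def by auto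
    have r3: "\<rho> \<le> \<gamma> * sqrt B / (4 * L + 1)" unfolding \<rho>_def by auto
    have key: "8 * L\<^sup>2 * \<rho>\<^sup>2 / \<gamma>\<^sup>2 \<le> B / 2"
    proof -
      have "\<rho> * (4 * L + 1) \<le> \<gamma> * sqrt B" using r3 L_nn by (simp add: pos_le_divide_eq)
      hence "(\<rho> * (4 * L + 1))\<^sup>2 \<le> (\<gamma> * sqrt B)\<^sup>2" using rp L_nn by (intro power_mono) auto
      hence a: "\<rho>\<^sup>2 * (4 * L + 1)\<^sup>2 \<le> \<gamma>\<^sup>2 * B" using B by (simp add: power_mult_distrib)
      have "16 * L\<^sup>2 \<le> (4 * L + 1)\<^sup>2" using L_nn by (simp add: power2_eq_square algebra_simps)
      hence "\<rho>\<^sup>2 * (16 * L\<^sup>2) \<le> \<rho>\<^sup>2 * (4 * L + 1)\<^sup>2" by (intro mult_left_mono) auto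
      with a have "16 * L\<^sup>2 * \<rho>\<^sup>2 \<le> B * \<gamma>\<^sup>2" by (simp add: algebra_simps)
      thus ?thesis using g by (simp add: field_simps)
    qed
    show "\<exists>\<rho>>0. \<forall>xa xb ya yb. \<bar>xa\<bar> \<le> K \<and> \<bar>xb\<bar> \<le> K \<and> \<bar>ya\<bar> \<le> \<rho> \<and> \<bar>yb\<bar> \<le> \<rho> \<longrightarrow>
      (f (xb + yb) - f xb - (f (xa + ya) - f xa))\<^sup>2 \<le> (2 * L\<^sup>2 + 1) * (yb - ya)\<^sup>2 + B * (xb - xa)\<^sup>2"
    proof (intro exI[of _ \<rho>] conjI rp allI impI)
      fix xa xb ya yb :: real
      assume h: "\<bar>xa\<bar> \<le> K \<and> \<bar>xb\<bar> \<le> K \<and> \<bar>ya\<bar> \<le> \<rho> \<and> \<bar>yb\<bar> \<le> \<rho>"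
      have inS: "\<And>u. \<bar>u\<bar> \<le> K + 1 \<Longrightarrow> u \<in> S" unfolding S_def by auto
      obtain \<xi>0 where x0: "min (xb+ya) (xb+yb) \<le> \<xi>0" "\<xi>0 \<le> max (xb+ya) (xb+yb)"
        "f (xb+yb) - f (xb+ya) = f' \<xi>0 * ((xb+yb) - (xb+ya))" using mvt_betw[OF d] by blast
      have "\<xi>0 \<in> S" using x0 h r1 by (intro inS) (auto simp: abs_le_iff)
      hence "\<bar>f' \<xi>0\<bar> \<le> L" by (rule L)
      hence first: "\<bar>f (xb+yb) - f (xb+ya)\<bar> \<le> L * \<bar>yb - ya\<bar>"
        using x0(3) by (simp add: abs_mult mult_right_mono)
      define sec where "sec = f (xb + ya) - f xb - (f (xa + ya) - f xa)"
      have sec_b: "sec\<^sup>2 \<le> B / 2 * (xb - xa)\<^sup>2"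
      proof (cases "\<bar>xb - xa\<bar> \<le> \<gamma>")
        case True
        obtain \<xi>1 where x1: "min (xa+ya) (xb+ya) \<le> \<xi>1" "\<xi>1 \<le> max (xa+ya) (xb+ya)"
          "f (xb+ya) - f (xa+ya) = f' \<xi>1 * ((xb+ya) - (xa+ya))" using mvt_betw[OF d] by blast
        obtain \<xi>2 where x2: "min xa xb \<le> \<xi>2" "\<xi>2 \<le> max xa xb"
          "f xb - f xa = f' \<xi>2 * (xb - xa)" using mvt_betw[OF d] by blast
        have s1: "\<xi>1 \<in> S" using x1 h r1 by (intro inS) (auto simp: abs_le_iff)
        have s2: "\<xi>2 \<in> S" using x2 h by (intro inS) (auto simp: abs_le_iff)
        have "\<bar>\<xi>1 - \<xi>2\<bar> \<le> \<rho> + \<gamma>" using x1 x2 h True by (auto simp: abs_le_iff)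
        hence "dist \<xi>1 \<xi>2 < dd" using r1 g by (simp add: dist_real_def)
        hence fd: "\<bar>f' \<xi>1 - f' \<xi>2\<bar> \<le> \<theta>" using ddp[OF s2 s1] by (simp add: dist_real_def)
        have "sec = (f' \<xi>1 - f' \<xi>2) * (xb - xa)" unfolding sec_def using x1(3) x2(3) by (simp add: algebra_simps)
        hence "\<bar>sec\<bar> \<le> \<theta> * \<bar>xb - xa\<bar>" using fd by (simp add: abs_mult mult_right_mono)
        hence "sec\<^sup>2 \<le> (\<theta> * \<bar>xb - xa\<bar>)\<^sup>2" by (metis abs_ge_zero power2_abs power_mono)
        also have "\<dots> = B / 4 * (xb - xa)\<^sup>2" using th by (simp add: power_mult_distrib)
        also have "\<dots> \<le> B / 2 * (xb - xa)\<^sup>2" using B by (intro mult_right_mono) auto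
        finally show ?thesis .
      next
        case False
        obtain \<xi>1 where x1: "min xb (xb+ya) \<le> \<xi>1" "\<xi>1 \<le> max xb (xb+ya)"
          "f (xb+ya) - f xb = f' \<xi>1 * ((xb+ya) - xb)" using mvt_betw[OF d] by blast
        obtain \<xi>2 where x2: "min xa (xa+ya) \<le> \<xi>2" "\<xi>2 \<le> max xa (xa+ya)"
          "f (xa+ya) - f xa = f' \<xi>2 * ((xa+ya) - xa)" using mvt_betw[OF d] by blast
        have s1: "\<bar>f' \<xi>1\<bar> \<le> L" using x1 h r1 by (intro L inS) (auto simp: abs_le_iff)
        have s2: "\<bar>f' \<xi>2\<bar> \<le> L" using x2 h r1 by (intro L inS) (auto simp: abs_le_iff)
        have "\<bar>f (xb+ya) - f xb\<bar> \<le> L * \<rho>" using x1(3) s1 h L_nn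
          by (simp add: abs_mult mult_mono)
        moreover have "\<bar>f (xa+ya) - f xa\<bar> \<le> L * \<rho>" using x2(3) s2 h L_nn
          by (simp add: abs_mult mult_mono)
        ultimately have "\<bar>sec\<bar> \<le> 2 * L * \<rho>" unfolding sec_def by linarith
        hence "sec\<^sup>2 \<le> (2 * L * \<rho>)\<^sup>2" by (metis abs_ge_zero power2_abs power_mono)
        also have "\<dots> = 4 * L\<^sup>2 * \<rho>\<^sup>2 / \<gamma>\<^sup>2 * \<gamma>\<^sup>2" using g by (simp add: power_mult_distrib)
        also have "\<dots> \<le> 4 * L\<^sup>2 * \<rho>\<^sup>2 / \<gamma>\<^sup>2 * (xb - xa)\<^sup>2"
        proof (intro mult_left_mono)
          have "\<gamma> \<le> \<bar>xb - xa\<bar>" using False by simp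
          hence "\<gamma>\<^sup>2 \<le> \<bar>xb - xa\<bar>\<^sup>2" using g by (intro power_mono) auto
          thus "\<gamma>\<^sup>2 \<le> (xb - xa)\<^sup>2" by simp
        qed auto
        also have "\<dots> \<le> B / 2 * (xb - xa)\<^sup>2"
        proof (intro mult_right_mono)
          have "4 * L\<^sup>2 * \<rho>\<^sup>2 / \<gamma>\<^sup>2 = (8 * L\<^sup>2 * \<rho>\<^sup>2 / \<gamma>\<^sup>2) / 2" by simp
          thus "4 * L\<^sup>2 * \<rho>\<^sup>2 / \<gamma>\<^sup>2 \<le> B / 2" using key B by linarith
        qed auto
        finally show ?thesis .
      qed
      have eq: "f (xb + yb) - f xb - (f (xa + ya) - f xa) = (f (xb+yb) - f (xb+ya)) + sec"
        unfolding sec_def by simp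
      have "(f (xb + yb) - f xb - (f (xa + ya) - f xa))\<^sup>2 \<le> 2 * (f (xb+yb) - f (xb+ya))\<^sup>2 + 2 * sec\<^sup>2"
        unfolding eq using zero_le_power2[of "f (xb+yb) - f (xb+ya) - sec"]
        by (simp add: power2_eq_square algebra_simps)
      also have "(f (xb+yb) - f (xb+ya))\<^sup>2 \<le> (L * \<bar>yb - ya\<bar>)\<^sup>2"
        using first by (metis abs_ge_zero power2_abs power_mono)
      hence "2 * (f (xb+yb) - f (xb+ya))\<^sup>2 \<le> 2 * L\<^sup>2 * (yb - ya)\<^sup>2" by (simp add: power_mult_distrib)
      hence "2 * (f (xb+yb) - f (xb+ya))\<^sup>2 + 2 * sec\<^sup>2 \<le> 2 * L\<^sup>2 * (yb - ya)\<^sup>2 + B * (xb - xa)\<^sup>2"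
        using sec_b by linarith
      also have "\<dots> \<le> (2 * L\<^sup>2 + 1) * (yb - ya)\<^sup>2 + B * (xb - xa)\<^sup>2" by (simp add: algebra_simps)
      finally show "(f (xb + yb) - f xb - (f (xa + ya) - f xa))\<^sup>2 \<le> (2 * L\<^sup>2 + 1) * (yb - ya)\<^sup>2 + B * (xb - xa)\<^sup>2" .
    qed
  qed
  qed
qed



lemma cadlag_local:
  assumes c: "cadlag_path t g" and s: "s \<in> {0..t}"
  shows "\<exists>e>0. \<exists>B. \<forall>u\<in>{0..t}. \<bar>u - s\<bar> < e \<longrightarrow> \<bar>g u\<bar> \<le> B"
proof -
  have R: "\<exists>b>s. \<exists>Br. \<forall>u\<in>{0..t}. s < u \<and> u < b \<longrightarrow> \<bar>g u\<bar> \<le> Br"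
  proof (cases "s < t")
    case True
    hence "(g \<longlongrightarrow> g s) (at_right s)" using c s unfolding cadlag_path_def by auto
    hence "eventually (\<lambda>u. dist (g u) (g s) < 1) (at_right s)" by (rule tendstoD) simp
    then obtain b where "b > s" and b: "\<And>u. u > s \<Longrightarrow> u < b \<Longrightarrow> dist (g u) (g s) < 1"
      unfolding eventually_at_right_field by blast
    moreover have "\<forall>u\<in>{0..t}. s < u \<and> u < b \<longrightarrow> \<bar>g u\<bar> \<le> \<bar>g s\<bar> + 1"
      using b by (force simp: dist_real_def abs_less_iff abs_le_iff)
    ultimately show ?thesis by blast
  next
    case False thus ?thesis using s by (intro exI[of _ "s+1"]) auto
  qed
  have L: "\<exists>a<s. \<exists>Bl. \<forall>u\<in>{0..t}. a < u \<and> u < s \<longrightarrow> \<bar>g u\<bar> \<le> Bl"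
  proof (cases "s > 0")
    case True
    then obtain l where "(g \<longlongrightarrow> l) (at_left s)" using c s unfolding cadlag_path_def by force
    hence "eventually (\<lambda>u. dist (g u) l < 1) (at_left s)" by (rule tendstoD) simp
    then obtain a where "a < s" and a: "\<And>u. u > a \<Longrightarrow> u < s \<Longrightarrow> dist (g u) l < 1"
      unfolding eventually_at_left_field by blast
    moreover have "\<forall>u\<in>{0..t}. a < u \<and> u < s \<longrightarrow> \<bar>g u\<bar> \<le> \<bar>l\<bar> + 1"
      using a by (force simp: dist_real_def abs_less_iff abs_le_iff)
    ultimately show ?thesis by blast
  next
    case False thus ?thesis using s by (intro exI[of _ "s-1"]) auto
  qed
  from R L obtain a b Br Bl where ab: "a < s" "s < b"
    and Br: "\<forall>u\<in>{0..t}. s < u \<and> u < b \<longrightarrow> \<bar>g u\<bar> \<le> Br"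
    and Bl: "\<forall>u\<in>{0..t}. a < u \<and> u < s \<longrightarrow> \<bar>g u\<bar> \<le> Bl" by blast
  show ?thesis
  proof (rule exI[of _ "min (b - s) (s - a)"], rule conjI)
    show "min (b - s) (s - a) > 0" using ab by auto
  next
    show "\<exists>B. \<forall>u\<in>{0..t}. \<bar>u - s\<bar> < min (b - s) (s - a) \<longrightarrow> \<bar>g u\<bar> \<le> B"
    proof (rule exI[of _ "max \<bar>g s\<bar> (max Br Bl)"], intro ballI impI)
    fix u assume u: "u \<in> {0..t}" "\<bar>u - s\<bar> < min (b - s) (s - a)"
    show "\<bar>g u\<bar> \<le> max \<bar>g s\<bar> (max Br Bl)"
    proof (cases u s rule: linorder_cases)
      case less
      hence "a < u" using u(2) by (auto simp: abs_less_iff)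
      thus ?thesis using Bl u(1) less by force
    next
      case equal thus ?thesis by simp
    next
      case greater
      hence "u < b" using u(2) by (auto simp: abs_less_iff)
      thus ?thesis using Br u(1) greater by force
    qed
    qed
  qed
qed

lemma cadlag_bounded:
  assumes c: "cadlag_path t g"
  shows "\<exists>B. \<forall>u\<in>{0..t}. \<bar>g u\<bar> \<le> B"
proof -
  have "\<forall>s\<in>{0..t}. \<exists>e. e > 0 \<and> (\<exists>B. \<forall>u\<in>{0..t}. \<bar>u - s\<bar> < e \<longrightarrow> \<bar>g u\<bar> \<le> B)"
    using cadlag_local[OF c] by blast
  then obtain e where e: "\<And>s. s \<in> {0..t} \<Longrightarrow> e s > 0 \<and> (\<exists>B. \<forall>u\<in>{0..t}. \<bar>u - s\<bar> < e s \<longrightarrow> \<bar>g u\<bar> \<le> B)"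
    by metis
  then obtain Bf where Bf: "\<And>s. s \<in> {0..t} \<Longrightarrow> \<forall>u\<in>{0..t}. \<bar>u - s\<bar> < e s \<longrightarrow> \<bar>g u\<bar> \<le> Bf s"
    by metis
  have cov: "{0..t} \<subseteq> (\<Union>s\<in>{0..t}. ball s (e s))" using e by force
  obtain C where C: "C \<subseteq> {0..t}" "finite C" "{0..t} \<subseteq> (\<Union>s\<in>C. ball s (e s))"
    using compactE_image[of "{0..t::real}" "{0..t}" "\<lambda>s. ball s (e s)"] cov by auto
  show ?thesis
  proof (intro exI[of _ "\<Sum>s\<in>C. \<bar>Bf s\<bar>"] ballI)
    fix u assume u: "u \<in> {0..t}"
    then obtain s where s: "s \<in> C" "u \<in> ball s (e s)" using C by blast
    hence "\<bar>g u\<bar> \<le> Bf s" using Bf[of s] C(1) u by (auto simp: dist_real_def abs_minus_commute)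
    also have "\<dots> \<le> \<bar>Bf s\<bar>" by simp
    also have "\<dots> \<le> (\<Sum>s\<in>C. \<bar>Bf s\<bar>)" using s(1) C(2) by (intro member_le_sum) auto
    finally show "\<bar>g u\<bar> \<le> (\<Sum>s\<in>C. \<bar>Bf s\<bar>)" .
  qed
qed



definition rcb :: "real \<Rightarrow> (real \<Rightarrow> real) \<Rightarrow> bool" where
  "rcb t g \<longleftrightarrow> (\<exists>B. \<forall>u\<in>{0..t}. \<bar>g u\<bar> \<le> B) \<and> (\<forall>s\<in>{0..<t}. (g \<longlongrightarrow> g s) (at_right s))"

lemma cadlag_rcb: "cadlag_path t g \<Longrightarrow> rcb t g"
  unfolding rcb_def using cadlag_bounded[of t g] unfolding cadlag_path_def by blast

lemma rcb_const: "rcb t (\<lambda>s. c)"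
  unfolding rcb_def by auto

lemma rcb_add: assumes "rcb t g" "rcb t h" shows "rcb t (\<lambda>s. g s + h s)"
proof -
  from assms obtain B1 B2 where "\<forall>u\<in>{0..t}. \<bar>g u\<bar> \<le> B1" "\<forall>u\<in>{0..t}. \<bar>h u\<bar> \<le> B2"
    unfolding rcb_def by blast
  hence "\<forall>u\<in>{0..t}. \<bar>g u + h u\<bar> \<le> B1 + B2"
  proof (intro ballI)
    fix u assume "\<forall>u\<in>{0..t}. \<bar>g u\<bar> \<le> B1" "\<forall>u\<in>{0..t}. \<bar>h u\<bar> \<le> B2" "u \<in> {0..t}"
    hence "\<bar>g u\<bar> \<le> B1" "\<bar>h u\<bar> \<le> B2" by auto
    thus "\<bar>g u + h u\<bar> \<le> B1 + B2" by arith
  qed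
  thus ?thesis using assms unfolding rcb_def by (auto intro: tendsto_add)
qed

lemma rcb_diff: assumes "rcb t g" "rcb t h" shows "rcb t (\<lambda>s. g s - h s)"
proof -
  from assms obtain B1 B2 where "\<forall>u\<in>{0..t}. \<bar>g u\<bar> \<le> B1" "\<forall>u\<in>{0..t}. \<bar>h u\<bar> \<le> B2"
    unfolding rcb_def by blast
  hence "\<forall>u\<in>{0..t}. \<bar>g u - h u\<bar> \<le> B1 + B2"
  proof (intro ballI)
    fix u assume "\<forall>u\<in>{0..t}. \<bar>g u\<bar> \<le> B1" "\<forall>u\<in>{0..t}. \<bar>h u\<bar> \<le> B2" "u \<in> {0..t}"
    hence "\<bar>g u\<bar> \<le> B1" "\<bar>h u\<bar> \<le> B2" by auto
    thus "\<bar>g u - h u\<bar> \<le> B1 + B2" by arith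
  qed
  thus ?thesis using assms unfolding rcb_def by (auto intro: tendsto_diff)
qed

lemma rcb_mult: assumes "rcb t g" "rcb t h" shows "rcb t (\<lambda>s. g s * h s)"
proof -
  from assms obtain B1 B2 where b1: "\<forall>u\<in>{0..t}. \<bar>g u\<bar> \<le> B1" and b2: "\<forall>u\<in>{0..t}. \<bar>h u\<bar> \<le> B2"
    unfolding rcb_def by blast
  hence "\<forall>u\<in>{0..t}. \<bar>g u * h u\<bar> \<le> B1 * B2"
    by (auto simp: abs_mult intro!: mult_mono)
  thus ?thesis using assms unfolding rcb_def by (auto intro: tendsto_mult)
qed

lemma rcb_sum: assumes "finite I" "\<And>i. i \<in> I \<Longrightarrow> rcb t (g i)" shows "rcb t (\<lambda>s. \<Sum>i\<in>I. g i s)"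
  using assms by (induction I rule: finite_induct) (auto intro: rcb_add rcb_const)

lemma rcb_comp:
  assumes f: "continuous_on UNIV f" and g: "rcb t g" shows "rcb t (\<lambda>s. f (g s))"
proof -
  from g obtain B where B: "\<forall>u\<in>{0..t}. \<bar>g u\<bar> \<le> B" unfolding rcb_def by blast
  have "compact (f ` {-B..B})" by (rule compact_continuous_image) (auto intro: continuous_on_subset[OF f])
  then obtain C where C: "\<forall>y\<in>f ` {-B..B}. norm y \<le> C" using compact_imp_bounded bounded_iff by metis
  have "\<forall>u\<in>{0..t}. \<bar>f (g u)\<bar> \<le> C" using B C by (force simp: abs_le_iff)
  moreover have "\<forall>s\<in>{0..<t}. ((\<lambda>s. f (g s)) \<longlongrightarrow> f (g s)) (at_right s)"
    using g f unfolding rcb_def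
    by (auto intro!: isCont_tendsto_compose[of _ f] simp: continuous_on_eq_continuous_at)
  ultimately show ?thesis unfolding rcb_def by blast
qed

lemma rcb_min:
  assumes g: "rcb t g" and c: "c \<in> {0..t}" shows "rcb t (\<lambda>s. g (min c s))"
proof -
  from g obtain B where B: "\<forall>u\<in>{0..t}. \<bar>g u\<bar> \<le> B" unfolding rcb_def by blast
  have "\<forall>u\<in>{0..t}. \<bar>g (min c u)\<bar> \<le> B" using B c by (auto simp: min_def)
  moreover have "((\<lambda>s. g (min c s)) \<longlongrightarrow> g (min c s)) (at_right s)" if s: "s \<in> {0..<t}" for s
  proof (cases "s < c")
    case True
    have "(g \<longlongrightarrow> g s) (at_right s)" using g s unfolding rcb_def by auto
    moreover have "eventually (\<lambda>u. g u = g (min c u)) (at_right s)"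
      unfolding eventually_at_right_field using True by (intro exI[of _ c]) auto
    ultimately show ?thesis using True by (simp add: filterlim_cong[OF refl refl])
  next
    case False
    have "eventually (\<lambda>u. g (min c u) = g (min c s)) (at_right s)"
      unfolding eventually_at_right_field using False by (intro exI[of _ "s+1"]) (auto simp: min_def)
    thus ?thesis by (rule tendsto_eventually)
  qed
  ultimately show ?thesis unfolding rcb_def by blast
qed

lemma sup_abs_ge:
  assumes "rcb t (\<lambda>s. Y s \<omega>)" "s \<in> {0..t}"
  shows "\<bar>Y s \<omega>\<bar> \<le> sup_abs t Y \<omega>"
proof -
  from assms(1) obtain B where "\<forall>u\<in>{0..t}. \<bar>Y u \<omega>\<bar> \<le> B" unfolding rcb_def by blast
  hence "bdd_above ((\<lambda>s. \<bar>Y s \<omega>\<bar>) ` {0..t})" by (auto intro!: bdd_aboveI)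
  thus ?thesis unfolding sup_abs_def using assms(2) by (rule cSUP_upper2) auto
qed

lemma sup_abs_nonneg:
  assumes "rcb t (\<lambda>s. Y s \<omega>)" "t \<ge> 0"
  shows "0 \<le> sup_abs t Y \<omega>"
  using sup_abs_ge[where Y=Y, OF assms(1), of 0] assms(2) by auto

lemma sup_event:
  assumes t: "t \<ge> 0" and rc: "\<And>\<omega>. \<omega> \<in> space M \<Longrightarrow> rcb t (\<lambda>s. Y s \<omega>)"
    and meas: "\<And>s. s \<in> {0..t} \<Longrightarrow> Y s \<in> borel_measurable M"
  shows "{\<omega>\<in>space M. sup_abs t Y \<omega> > r} \<in> sets M"
proof -
  define Q where "Q = insert t (\<rat> \<inter> {0..t})"
  have cQ: "countable Q" unfolding Q_def using countable_rat by auto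
  have Qsub: "Q \<subseteq> {0..t}" unfolding Q_def using t by auto
  have eq: "{\<omega>\<in>space M. sup_abs t Y \<omega> > r} = (\<Union>q\<in>Q. {\<omega>\<in>space M. \<bar>Y q \<omega>\<bar> > r})"
  proof (intro equalityI subsetI)
    fix \<omega> assume "\<omega> \<in> {\<omega>\<in>space M. sup_abs t Y \<omega> > r}"
    hence \<omega>: "\<omega> \<in> space M" "r < sup_abs t Y \<omega>" by auto
    from rc[OF \<omega>(1)] obtain B where "\<forall>u\<in>{0..t}. \<bar>Y u \<omega>\<bar> \<le> B" unfolding rcb_def by blast
    hence bdd: "bdd_above ((\<lambda>s. \<bar>Y s \<omega>\<bar>) ` {0..t})" by (auto intro!: bdd_aboveI)
    obtain s where s: "s \<in> {0..t}" "r < \<bar>Y s \<omega>\<bar>"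
      using \<omega>(2) less_cSUP_iff[OF _ bdd, of r] t unfolding sup_abs_def by auto
    show "\<omega> \<in> (\<Union>q\<in>Q. {\<omega>\<in>space M. \<bar>Y q \<omega>\<bar> > r})"
    proof (cases "s = t")
      case True thus ?thesis using s \<omega> unfolding Q_def by auto
    next
      case False
      hence "s \<in> {0..<t}" using s by auto
      hence "((\<lambda>u. Y u \<omega>) \<longlongrightarrow> Y s \<omega>) (at_right s)" using rc[OF \<omega>(1)] unfolding rcb_def by auto
      hence "((\<lambda>u. \<bar>Y u \<omega>\<bar>) \<longlongrightarrow> \<bar>Y s \<omega>\<bar>) (at_right s)" by (rule tendsto_rabs)
      hence "eventually (\<lambda>u. r < \<bar>Y u \<omega>\<bar>) (at_right s)" using s(2) by (rule order_tendstoD)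
      then obtain b where b: "b > s" "\<And>u. u > s \<Longrightarrow> u < b \<Longrightarrow> r < \<bar>Y u \<omega>\<bar>"
        unfolding eventually_at_right_field by blast
      have "s < min b t" using b \<open>s \<in> {0..<t}\<close> by auto
      then obtain q where q: "q \<in> \<rat>" "s < q" "q < min b t" using Rats_dense_in_real by blast
      hence "q \<in> Q" using s unfolding Q_def by auto
      thus ?thesis using b(2)[of q] q \<omega> by auto
    qed
  next
    fix \<omega> assume "\<omega> \<in> (\<Union>q\<in>Q. {\<omega>\<in>space M. \<bar>Y q \<omega>\<bar> > r})"
    then obtain q where q: "q \<in> Q" "\<omega> \<in> space M" "r < \<bar>Y q \<omega>\<bar>" by auto
    have "\<bar>Y q \<omega>\<bar> \<le> sup_abs t Y \<omega>" using sup_abs_ge[where Y=Y, OF rc[OF q(2)]] q(1) Qsub by auto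
    thus "\<omega> \<in> {\<omega>\<in>space M. sup_abs t Y \<omega> > r}" using q by auto
  qed
  show ?thesis unfolding eq
  proof (rule sets.countable_UN''[OF cQ])
    fix q assume "q \<in> Q"
    hence "Y q \<in> borel_measurable M" using meas Qsub by auto
    thus "{\<omega> \<in> space M. r < \<bar>Y q \<omega>\<bar>} \<in> sets M" by measurable
  qed
qed



lemma gt_set: "(g::'a \<Rightarrow> real) \<in> borel_measurable M \<Longrightarrow> {\<omega>\<in>space M. c < g \<omega>} \<in> sets M"
  using borel_measurable_iff_greater by blast

lemma tail_small:
  fixes W :: "'a \<Rightarrow> real"
  assumes P: "prob_space M" and E: "\<And>K. {\<omega>\<in>space M. W \<omega> > K} \<in> sets M" and e: "e > 0"
  shows "\<exists>K>0. measure M {\<omega>\<in>space M. W \<omega> > K} \<le> e"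
proof -
  interpret prob_space M by (rule P)
  define A where "A k = {\<omega>\<in>space M. W \<omega> > real k}" for k :: nat
  have "range A \<subseteq> sets M" unfolding A_def using E by auto
  moreover have "decseq A" unfolding A_def decseq_def by auto
  ultimately have "(\<lambda>k. measure M (A k)) \<longlonglongrightarrow> measure M (\<Inter>k. A k)" by (rule finite_Lim_measure_decseq)
  moreover have "(\<Inter>k. A k) = {}"
  proof -
    have "\<omega> \<notin> (\<Inter>k. A k)" for \<omega>
    proof
      assume "\<omega> \<in> (\<Inter>k. A k)"
      then have "W \<omega> > real (nat \<lceil>W \<omega>\<rceil>)" unfolding A_def by blast
      thus False by linarith
    qed
    thus ?thesis by blast
  qed
  ultimately have "(\<lambda>k. measure M (A k)) \<longlonglongrightarrow> 0" by simp
  hence "eventually (\<lambda>k. measure M (A k) < e) sequentially" using e by (rule order_tendstoD)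
  moreover have "eventually (\<lambda>k. k \<ge> (1::nat)) sequentially" by (rule eventually_ge_at_top)
  ultimately have "eventually (\<lambda>k. measure M (A k) < e \<and> k \<ge> 1) sequentially" by (rule eventually_conj)
  then obtain N where "\<forall>k\<ge>N. measure M (A k) < e \<and> k \<ge> 1" unfolding eventually_sequentially by blast
  then obtain k where "measure M (A k) < e" "k \<ge> 1" by blast
  thus ?thesis unfolding A_def by (intro exI[of _ "real k"]) auto
qed

definition approx_ok :: "'a measure \<Rightarrow> (nat \<Rightarrow> 'a \<Rightarrow> real) \<Rightarrow> (nat \<Rightarrow> 'a \<Rightarrow> real) \<Rightarrow> ('a \<Rightarrow> real)
   \<Rightarrow> ('a \<Rightarrow> real) \<Rightarrow> (nat \<Rightarrow> 'a \<Rightarrow> real) \<Rightarrow> real \<Rightarrow> real \<Rightarrow> real \<Rightarrow> real \<Rightarrow> bool" where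
  "approx_ok M Zt Dt Qt Xs Ys K A B \<rho> \<longleftrightarrow> (\<forall>n e h. e > 0 \<longrightarrow> h > 0 \<longrightarrow>
     (\<exists>SZ SY SX. SZ \<in> borel_measurable M \<and> SY \<in> borel_measurable M \<and> SX \<in> borel_measurable M \<and>
        (\<forall>\<omega>\<in>space M. 0 \<le> SZ \<omega>) \<and>
        measure M {\<omega>\<in>space M. \<bar>SZ \<omega> - Zt n \<omega>\<bar> > e} \<le> h \<and>
        measure M {\<omega>\<in>space M. \<bar>SY \<omega> - Dt n \<omega>\<bar> > e} \<le> h \<and>
        measure M {\<omega>\<in>space M. \<bar>SX \<omega> - Qt \<omega>\<bar> > e} \<le> h \<and>
        (\<forall>\<omega>\<in>space M. Xs \<omega> \<le> K \<longrightarrow> Ys n \<omega> \<le> \<rho> \<longrightarrow> SZ \<omega> \<le> A * SY \<omega> + B * SX \<omega>)))"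

lemma prob_main:
  fixes Xs Qt :: "'a \<Rightarrow> real" and Ys Zt Dt :: "nat \<Rightarrow> 'a \<Rightarrow> real"
  assumes P: "prob_space M"
  and Zm: "\<And>n. Zt n \<in> borel_measurable M" and Dm: "\<And>n. Dt n \<in> borel_measurable M"
  and Qm: "Qt \<in> borel_measurable M"
  and Xse: "\<And>K. {\<omega>\<in>space M. Xs \<omega> > K} \<in> sets M"
  and Yse: "\<And>n r. {\<omega>\<in>space M. Ys n \<omega> > r} \<in> sets M"
  and Ysc: "\<And>r. r > 0 \<Longrightarrow> (\<lambda>n. measure M {\<omega>\<in>space M. Ys n \<omega> > r}) \<longlonglongrightarrow> 0"
  and Dc: "conv_prob_zero M Dt"
  and H: "\<forall>K>0. \<exists>A>0. \<forall>B>0. \<exists>\<rho>>0. approx_ok M Zt Dt Qt Xs Ys K A B \<rho>"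
  shows "conv_prob_zero M Zt"
  unfolding conv_prob_zero_def
proof (intro allI impI)
  interpret prob_space M by (rule P)
  fix \<epsilon> :: real assume \<epsilon>: "\<epsilon> > 0"
  show "(\<lambda>n. measure M {\<omega> \<in> space M. \<epsilon> < \<bar>Zt n \<omega>\<bar>}) \<longlonglongrightarrow> 0"
  proof (rule LIMSEQ_I)
    fix e :: real assume e: "e > 0"
    define \<eta> where "\<eta> = e / 8"
    have \<eta>: "\<eta> > 0" unfolding \<eta>_def using e by simp
    obtain K where K: "K > 0" "measure M {\<omega>\<in>space M. Xs \<omega> > K} \<le> \<eta>"
      using tail_small[OF P Xse \<eta>] by blast
    have Qe: "{\<omega>\<in>space M. \<bar>Qt \<omega>\<bar> > K'} \<in> sets M" for K'
      by (intro gt_set borel_measurable_abs Qm)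
    obtain M' where M': "M' > 0" "measure M {\<omega>\<in>space M. \<bar>Qt \<omega>\<bar> > M'} \<le> \<eta>"
      using tail_small[OF P Qe \<eta>] by blast
    from H K(1) obtain A where A: "A > 0" and HA: "\<forall>B>0. \<exists>\<rho>>0. approx_ok M Zt Dt Qt Xs Ys K A B \<rho>" by blast
    define B where "B = \<epsilon> / (3 * (M' + 1))"
    have B: "B > 0" "B * (M' + 1) = \<epsilon> / 3" unfolding B_def using \<epsilon> M' by (auto simp: field_simps)
    from HA B(1) obtain \<rho> where \<rho>: "\<rho> > 0" and H\<rho>: "approx_ok M Zt Dt Qt Xs Ys K A B \<rho>" by blast
    define \<epsilon>2 where "\<epsilon>2 = \<epsilon> / (6 * A)"
    have \<epsilon>2: "\<epsilon>2 > 0" "A * (2 * \<epsilon>2) = \<epsilon> / 3" unfolding \<epsilon>2_def using \<epsilon> A by auto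
    have ev1: "eventually (\<lambda>n. measure M {\<omega>\<in>space M. Ys n \<omega> > \<rho>} < \<eta>) sequentially"
      using Ysc[OF \<rho>] \<eta> by (rule order_tendstoD)
    have ev2: "eventually (\<lambda>n. measure M {\<omega>\<in>space M. \<bar>Dt n \<omega>\<bar> > \<epsilon>2} < \<eta>) sequentially"
    proof -
      have "(\<lambda>n. measure M {\<omega>\<in>space M. \<bar>Dt n \<omega>\<bar> > \<epsilon>2}) \<longlonglongrightarrow> 0"
        using Dc \<epsilon>2(1) unfolding conv_prob_zero_def by blast
      thus ?thesis using \<eta> by (rule order_tendstoD)
    qed
    from eventually_conj[OF ev1 ev2] obtain N where N: "\<And>n. n \<ge> N \<Longrightarrow>
        measure M {\<omega>\<in>space M. Ys n \<omega> > \<rho>} < \<eta> \<and> measure M {\<omega>\<in>space M. \<bar>Dt n \<omega>\<bar> > \<epsilon>2} < \<eta>"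
      unfolding eventually_sequentially by blast
    show "\<exists>N. \<forall>n\<ge>N. norm (measure M {\<omega> \<in> space M. \<epsilon> < \<bar>Zt n \<omega>\<bar>} - 0) < e"
    proof (intro exI[of _ N] allI impI)
      fix n assume n: "n \<ge> N"
      define \<epsilon>' where "\<epsilon>' = min (\<epsilon> / 3) (min \<epsilon>2 1)"
      have \<epsilon>': "\<epsilon>' > 0" unfolding \<epsilon>'_def using \<epsilon> \<epsilon>2 by auto
      from H\<rho>[unfolded approx_ok_def, rule_format, OF \<epsilon>' \<eta>, of n] obtain SZ SY SX where
        mZ: "SZ \<in> borel_measurable M" and mY: "SY \<in> borel_measurable M" and mX: "SX \<in> borel_measurable M"
        and SZ0: "\<forall>\<omega>\<in>space M. 0 \<le> SZ \<omega>"
        and a1: "measure M {\<omega>\<in>space M. \<bar>SZ \<omega> - Zt n \<omega>\<bar> > \<epsilon>'} \<le> \<eta>"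
        and a2: "measure M {\<omega>\<in>space M. \<bar>SY \<omega> - Dt n \<omega>\<bar> > \<epsilon>'} \<le> \<eta>"
        and a3: "measure M {\<omega>\<in>space M. \<bar>SX \<omega> - Qt \<omega>\<bar> > \<epsilon>'} \<le> \<eta>"
        and pw: "\<forall>\<omega>\<in>space M. Xs \<omega> \<le> K \<longrightarrow> Ys n \<omega> \<le> \<rho> \<longrightarrow> SZ \<omega> \<le> A * SY \<omega> + B * SX \<omega>"
        by blast
      define E1 where "E1 = {\<omega>\<in>space M. Xs \<omega> > K}"
      define E2 where "E2 = {\<omega>\<in>space M. Ys n \<omega> > \<rho>}"
      define E3 where "E3 = {\<omega>\<in>space M. \<bar>SZ \<omega> - Zt n \<omega>\<bar> > \<epsilon>'}"
      define E4 where "E4 = {\<omega>\<in>space M. \<bar>SY \<omega> - Dt n \<omega>\<bar> > \<epsilon>'}"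
      define E5 where "E5 = {\<omega>\<in>space M. \<bar>SX \<omega> - Qt \<omega>\<bar> > \<epsilon>'}"
      define E6 where "E6 = {\<omega>\<in>space M. \<bar>Dt n \<omega>\<bar> > \<epsilon>2}"
      define E7 where "E7 = {\<omega>\<in>space M. \<bar>Qt \<omega>\<bar> > M'}"
      have s1: "E1 \<in> sets M" unfolding E1_def by (rule Xse)
      have s2: "E2 \<in> sets M" unfolding E2_def by (rule Yse)
      have s3: "E3 \<in> sets M" unfolding E3_def
        by (intro gt_set borel_measurable_abs borel_measurable_diff mZ Zm)
      have s4: "E4 \<in> sets M" unfolding E4_def
        by (intro gt_set borel_measurable_abs borel_measurable_diff mY Dm)
      have s5: "E5 \<in> sets M" unfolding E5_def
        by (intro gt_set borel_measurable_abs borel_measurable_diff mX Qm)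
      have s6: "E6 \<in> sets M" unfolding E6_def by (intro gt_set borel_measurable_abs Dm)
      have s7: "E7 \<in> sets M" unfolding E7_def by (intro gt_set borel_measurable_abs Qm)
      have sub: "{\<omega> \<in> space M. \<epsilon> < \<bar>Zt n \<omega>\<bar>} \<subseteq> E1 \<union> E2 \<union> E3 \<union> E4 \<union> E5 \<union> E6 \<union> E7"
      proof
        fix \<omega> assume w: "\<omega> \<in> {\<omega> \<in> space M. \<epsilon> < \<bar>Zt n \<omega>\<bar>}"
        show "\<omega> \<in> E1 \<union> E2 \<union> E3 \<union> E4 \<union> E5 \<union> E6 \<union> E7"
        proof (rule ccontr)
          assume "\<omega> \<notin> E1 \<union> E2 \<union> E3 \<union> E4 \<union> E5 \<union> E6 \<union> E7"
          hence g: "Xs \<omega> \<le> K" "Ys n \<omega> \<le> \<rho>" "\<bar>SZ \<omega> - Zt n \<omega>\<bar> \<le> \<epsilon>'" "\<bar>SY \<omega> - Dt n \<omega>\<bar> \<le> \<epsilon>'"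
            "\<bar>SX \<omega> - Qt \<omega>\<bar> \<le> \<epsilon>'" "\<bar>Dt n \<omega>\<bar> \<le> \<epsilon>2" "\<bar>Qt \<omega>\<bar> \<le> M'" and ws: "\<omega> \<in> space M"
            using w unfolding E1_def E2_def E3_def E4_def E5_def E6_def E7_def by auto
          have e': "\<epsilon>' \<le> \<epsilon> / 3" "\<epsilon>' \<le> \<epsilon>2" "\<epsilon>' \<le> 1" unfolding \<epsilon>'_def by auto
          have "SY \<omega> \<le> 2 * \<epsilon>2" using g(4,6) e' by linarith
          hence "A * SY \<omega> \<le> A * (2 * \<epsilon>2)" using A by (intro mult_left_mono) auto
          hence y: "A * SY \<omega> \<le> \<epsilon> / 3" using \<epsilon>2(2) by linarith
          have "SX \<omega> \<le> M' + 1" using g(5,7) e' by linarith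
          hence "B * SX \<omega> \<le> B * (M' + 1)" using B by (intro mult_left_mono) auto
          hence x: "B * SX \<omega> \<le> \<epsilon> / 3" using B(2) by linarith
          have "SZ \<omega> \<le> A * SY \<omega> + B * SX \<omega>" using pw ws g(1,2) by blast
          hence "Zt n \<omega> \<le> \<epsilon>" using g(3) e' x y by linarith
          moreover have "- Zt n \<omega> \<le> \<epsilon>"
          proof -
            have "0 \<le> SZ \<omega>" using SZ0 ws by blast
            thus ?thesis using g(3) e' \<epsilon> by linarith
          qed
          moreover have "\<epsilon> < \<bar>Zt n \<omega>\<bar>" using w by simp
          ultimately show False by linarith
        qed
      qed
      have "measure M {\<omega> \<in> space M. \<epsilon> < \<bar>Zt n \<omega>\<bar>} \<le> measure M (E1 \<union> E2 \<union> E3 \<union> E4 \<union> E5 \<union> E6 \<union> E7)"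
        using sub s1 s2 s3 s4 s5 s6 s7 by (intro finite_measure_mono) auto
      also have "\<dots> \<le> measure M E1 + measure M E2 + measure M E3 + measure M E4 + measure M E5 + measure M E6 + measure M E7"
      proof -
        have u1: "measure M (E1 \<union> E2) \<le> measure M E1 + measure M E2" using s1 s2 by (rule measure_Un_le)
        have u2: "measure M (E1 \<union> E2 \<union> E3) \<le> measure M (E1 \<union> E2) + measure M E3" using s1 s2 s3 by (intro measure_Un_le) auto
        have u3: "measure M (E1 \<union> E2 \<union> E3 \<union> E4) \<le> measure M (E1 \<union> E2 \<union> E3) + measure M E4" using s1 s2 s3 s4 by (intro measure_Un_le) auto
        have u4: "measure M (E1 \<union> E2 \<union> E3 \<union> E4 \<union> E5) \<le> measure M (E1 \<union> E2 \<union> E3 \<union> E4) + measure M E5" using s1 s2 s3 s4 s5 by (intro measure_Un_le) auto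
        have u5: "measure M (E1 \<union> E2 \<union> E3 \<union> E4 \<union> E5 \<union> E6) \<le> measure M (E1 \<union> E2 \<union> E3 \<union> E4 \<union> E5) + measure M E6" using s1 s2 s3 s4 s5 s6 by (intro measure_Un_le) auto
        have u6: "measure M (E1 \<union> E2 \<union> E3 \<union> E4 \<union> E5 \<union> E6 \<union> E7) \<le> measure M (E1 \<union> E2 \<union> E3 \<union> E4 \<union> E5 \<union> E6) + measure M E7" using s1 s2 s3 s4 s5 s6 s7 by (intro measure_Un_le) auto
        show ?thesis using u1 u2 u3 u4 u5 u6 by linarith
      qed
      also have "\<dots> \<le> 7 * \<eta>"
      proof -
        have "measure M E1 \<le> \<eta>" "measure M E2 \<le> \<eta>" "measure M E3 \<le> \<eta>" "measure M E4 \<le> \<eta>"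
          "measure M E5 \<le> \<eta>" "measure M E6 \<le> \<eta>" "measure M E7 \<le> \<eta>"
          using K(2) M'(2) a1 a2 a3 N[OF n] unfolding E1_def E2_def E3_def E4_def E5_def E6_def E7_def
          by auto
        thus ?thesis by linarith
      qed
      also have "\<dots> < e" unfolding \<eta>_def using e by simp
      finally show "norm (measure M {\<omega> \<in> space M. \<epsilon> < \<bar>Zt n \<omega>\<bar>} - 0) < e" by simp
    qed
  qed
qed



lemma meas_F:
  assumes U: "usual_hypotheses M F" and m: "g \<in> borel_measurable (F s)"
  shows "g \<in> borel_measurable M"
proof -
  have fi: "filtration (space M) F" and ss: "sets (F s) \<subseteq> sets M"
    using U unfolding usual_hypotheses_def by blast+
  have sp: "space (F s) = space M" using filtration.space_F[OF fi] .
  show ?thesis using m sp ss unfolding measurable_def by auto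
qed

lemma adapted_meas:
  assumes U: "usual_hypotheses M F" and a: "adapted F t Y" and s: "s \<in> {0..t}"
  shows "Y s \<in> borel_measurable M"
  using a s meas_F[OF U] unfolding adapted_def by blast

lemma pw_sum:
  fixes f :: "real \<Rightarrow> real"
  assumes fK: "\<forall>xa xb ya yb. \<bar>xa\<bar> \<le> K \<and> \<bar>xb\<bar> \<le> K \<and> \<bar>ya\<bar> \<le> \<rho> \<and> \<bar>yb\<bar> \<le> \<rho> \<longrightarrow>
      (f (xb + yb) - f xb - (f (xa + ya) - f xa))\<^sup>2 \<le> A * (yb - ya)\<^sup>2 + B * (xb - xa)\<^sup>2"
    and pts: "\<And>i. i \<in> I \<Longrightarrow> p i \<in> {0..t} \<and> q i \<in> {0..t}"
    and bd: "\<And>s. s \<in> {0..t} \<Longrightarrow> \<bar>x s\<bar> \<le> K \<and> \<bar>y s\<bar> \<le> \<rho>"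
  shows "(\<Sum>i\<in>I. (f (x (q i) + y (q i)) - f (x (q i)) - (f (x (p i) + y (p i)) - f (x (p i))))\<^sup>2)
     \<le> A * (\<Sum>i\<in>I. (y (q i) - y (p i))\<^sup>2) + B * (\<Sum>i\<in>I. (x (q i) - x (p i))\<^sup>2)"
proof -
  have "(\<Sum>i\<in>I. (f (x (q i) + y (q i)) - f (x (q i)) - (f (x (p i) + y (p i)) - f (x (p i))))\<^sup>2)
     \<le> (\<Sum>i\<in>I. A * (y (q i) - y (p i))\<^sup>2 + B * (x (q i) - x (p i))\<^sup>2)"
  proof (rule sum_mono)
    fix i assume i: "i \<in> I"
    have "\<bar>x (p i)\<bar> \<le> K \<and> \<bar>x (q i)\<bar> \<le> K \<and> \<bar>y (p i)\<bar> \<le> \<rho> \<and> \<bar>y (q i)\<bar> \<le> \<rho>"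
      using bd pts[OF i] by blast
    thus "(f (x (q i) + y (q i)) - f (x (q i)) - (f (x (p i) + y (p i)) - f (x (p i))))\<^sup>2
        \<le> A * (y (q i) - y (p i))\<^sup>2 + B * (x (q i) - x (p i))\<^sup>2"
      using fK[rule_format, of "x (p i)" "x (q i)" "y (p i)" "y (q i)"] by simp
  qed
  also have "\<dots> = A * (\<Sum>i\<in>I. (y (q i) - y (p i))\<^sup>2) + B * (\<Sum>i\<in>I. (x (q i) - x (p i))\<^sup>2)"
    by (simp add: sum.distrib sum_distrib_left)
  finally show ?thesis .
qed

lemma succ_pt_in:
  assumes "is_partition t D" "x \<in> D" "x < t"
  shows "succ_pt D x \<in> D"
proof -
  have "finite {y\<in>D. x < y}" "{y\<in>D. x < y} \<noteq> {}" using assms unfolding is_partition_def by auto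
  hence "Min {y\<in>D. x < y} \<in> {y\<in>D. x < y}" by (rule Min_in)
  thus ?thesis unfolding succ_pt_def by auto
qed

lemma discrete_qv_meas:
  assumes P: "is_partition t D" and m: "\<And>s. s \<in> {0..t} \<Longrightarrow> V s \<in> borel_measurable M"
  shows "(\<lambda>\<omega>. discrete_qv t D V t \<omega>) \<in> borel_measurable M"
  unfolding discrete_qv_def
proof (intro borel_measurable_sum borel_measurable_power borel_measurable_diff)
  fix x assume x: "x \<in> {x \<in> D. x \<le> t \<and> x < t}"
  have "succ_pt D x \<in> D" using succ_pt_in[OF P] x by auto
  hence "x \<in> {0..t}" "succ_pt D x \<in> {0..t}" using P x unfolding is_partition_def by auto
  thus "V (succ_pt D x) \<in> borel_measurable M" "V x \<in> borel_measurable M" using m by auto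
qed

lemma cov_meas:
  assumes m: "\<And>s. s \<in> {0..t} \<Longrightarrow> V s \<in> borel_measurable M" and c: "\<And>i. 0 \<le> c i" and s: "s \<in> {0..t}"
  shows "(\<lambda>\<omega>. cov_P V V N (\<lambda>i \<omega>. c i) s \<omega>) \<in> borel_measurable M"
proof -
  have mm: "V (min (c i) s) \<in> borel_measurable M" for i
  proof -
    have "min (c i) s \<in> {0..t}" using c[of i] s by auto
    thus ?thesis using m by auto
  qed
  show ?thesis unfolding cov_P_def
    by (intro borel_measurable_sum borel_measurable_times borel_measurable_diff mm)
qed

lemma cov_rcb:
  assumes r: "rcb t (\<lambda>s. V s \<omega>)" and c: "\<And>i. c i \<in> {0..t}"
  shows "rcb t (\<lambda>s. cov_P V V N (\<lambda>i \<omega>. c i) s \<omega>)"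
  unfolding cov_P_def
  by (intro rcb_sum rcb_mult rcb_diff rcb_min[OF r] c) auto

lemma strong_approx:
  assumes P: "prob_space M" and U: "usual_hypotheses M F" and t: "t > 0"
    and rc: "\<And>\<omega>. \<omega> \<in> space M \<Longrightarrow> rcb t (\<lambda>s. V s \<omega>)"
    and m: "\<And>s. s \<in> {0..t} \<Longrightarrow> V s \<in> borel_measurable M"
    and sq: "strong_qv M F t V Q" and e: "e > 0" and h: "h > 0"
  shows "\<exists>\<delta>>0. \<forall>N::nat. N > 0 \<and> t / real N \<le> \<delta> \<longrightarrow>
     measure M {\<omega>\<in>space M. \<bar>cov_P V V N (\<lambda>i \<omega>. t * real i / real N) t \<omega> - Q t \<omega>\<bar> > e} \<le> h"
proof -
  interpret prob_space M by (rule P)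
  have fv: "fv_process M F t Q" and conv: "\<forall>\<epsilon>>0. \<forall>\<eta>>0. \<exists>\<delta>>0. \<forall>n \<tau>. stopping_partition M F t n \<tau> \<and> mesh_le M n \<tau> \<delta> \<longrightarrow>
        measure M {\<omega>\<in>space M. sup_abs t (\<lambda>s \<omega>. cov_P V V n \<tau> s \<omega> - Q s \<omega>) \<omega> > \<epsilon>} \<le> \<eta>"
    using sq unfolding strong_qv_def strong_cov_def by auto
  from conv[rule_format, OF e h] obtain \<delta> where \<delta>: "\<delta> > 0" and H: "\<forall>n \<tau>. stopping_partition M F t n \<tau> \<and> mesh_le M n \<tau> \<delta> \<longrightarrow>
        measure M {\<omega>\<in>space M. sup_abs t (\<lambda>s \<omega>. cov_P V V n \<tau> s \<omega> - Q s \<omega>) \<omega> > e} \<le> h" by blast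
  have Qrc: "\<And>\<omega>. \<omega> \<in> space M \<Longrightarrow> rcb t (\<lambda>s. Q s \<omega>)"
    using fv unfolding fv_process_def cadlag_process_def by (auto intro: cadlag_rcb)
  have Qm: "\<And>s. s \<in> {0..t} \<Longrightarrow> Q s \<in> borel_measurable M"
    using fv adapted_meas[OF U] unfolding fv_process_def by blast
  show ?thesis
  proof (intro exI[of _ \<delta>] conjI \<delta> allI impI)
    fix N :: nat assume N: "N > 0 \<and> t / real N \<le> \<delta>"
    define c where "c i = t * real i / real N" for i :: nat
    define \<tau> where "\<tau> = (\<lambda>i (\<omega>::'a). c i)"
    have cN: "c N = t" unfolding c_def using N by auto
    have cmono: "c i \<le> c (Suc i)" for i unfolding c_def using t N by (auto simp: divide_right_mono)
    have sp: "stopping_partition M F t N \<tau>"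
      unfolding stopping_partition_def \<tau>_def using cN cmono by (auto simp: stopping_time_const c_def)
    have ml: "mesh_le M N \<tau> \<delta>"
      unfolding mesh_le_def \<tau>_def c_def using N by (auto simp: field_simps)
    from H sp ml have bound: "measure M {\<omega>\<in>space M. sup_abs t (\<lambda>s \<omega>. cov_P V V N \<tau> s \<omega> - Q s \<omega>) \<omega> > e} \<le> h"
      by blast
    have c01: "c i \<in> {0..t}" if "i \<le> N" for i
      using that t N unfolding c_def by (auto simp: field_simps)
    define c' where "c' i = min (c i) t" for i
    have c'01: "c' i \<in> {0..t}" for i unfolding c'_def c_def using t N by (auto simp: min_def)
    have eqc: "cov_P V V N \<tau> s \<omega> = cov_P V V N (\<lambda>i \<omega>. c' i) s \<omega>" if "s \<in> {0..t}" for s \<omega>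
    proof -
      have "min (c i) s = min (c' i) s" for i unfolding c'_def using that by (auto simp: min_def)
      thus ?thesis unfolding cov_P_def \<tau>_def by simp
    qed
    define W where "W s \<omega> = cov_P V V N (\<lambda>i \<omega>. c' i) s \<omega> - Q s \<omega>" for s \<omega>
    have Wrc: "rcb t (\<lambda>s. W s \<omega>)" if "\<omega> \<in> space M" for \<omega>
      unfolding W_def by (intro rcb_diff cov_rcb rc Qrc that c'01)
    have Wm: "W s \<in> borel_measurable M" if "s \<in> {0..t}" for s
      unfolding W_def using c'01 that by (intro borel_measurable_diff cov_meas m Qm) auto
    have supeq: "sup_abs t (\<lambda>s \<omega>. cov_P V V N \<tau> s \<omega> - Q s \<omega>) \<omega> = sup_abs t W \<omega>" for \<omega>
      unfolding sup_abs_def W_def using eqc by (intro SUP_cong refl) auto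
    have Ev: "{\<omega>\<in>space M. sup_abs t W \<omega> > e} \<in> sets M"
      using t Wrc Wm by (intro sup_event) auto
    have sub: "{\<omega>\<in>space M. \<bar>cov_P V V N (\<lambda>i \<omega>. t * real i / real N) t \<omega> - Q t \<omega>\<bar> > e}
        \<subseteq> {\<omega>\<in>space M. sup_abs t W \<omega> > e}"
    proof safe
      fix \<omega> assume w: "\<omega> \<in> space M" "e < \<bar>cov_P V V N (\<lambda>i \<omega>. t * real i / real N) t \<omega> - Q t \<omega>\<bar>"
      have "cov_P V V N (\<lambda>i \<omega>. t * real i / real N) t \<omega> - Q t \<omega> = W t \<omega>"
        unfolding W_def using eqc[of t \<omega>] t unfolding \<tau>_def c_def by auto
      moreover have "\<bar>W t \<omega>\<bar> \<le> sup_abs t W \<omega>" using sup_abs_ge[where Y=W, OF Wrc[OF w(1)]] t by auto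
      ultimately show "e < sup_abs t W \<omega>" using w(2) by linarith
    qed
    have "measure M {\<omega>\<in>space M. \<bar>cov_P V V N (\<lambda>i \<omega>. t * real i / real N) t \<omega> - Q t \<omega>\<bar> > e}
        \<le> measure M {\<omega>\<in>space M. sup_abs t W \<omega> > e}" using sub Ev by (rule finite_measure_mono)
    also have "\<dots> \<le> h" using bound supeq by simp
    finally show "measure M {\<omega>\<in>space M. \<bar>cov_P V V N (\<lambda>i \<omega>. t * real i / real N) t \<omega> - Q t \<omega>\<bar> > e} \<le> h" .
  qed
qed



lemma cov_sq: "cov_P V V N \<tau> s \<omega> = (\<Sum>i\<in>{1..N}. (V (min (\<tau> i \<omega>) s) \<omega> - V (min (\<tau> (i - 1) \<omega>) s) \<omega>)\<^sup>2)"
  unfolding cov_P_def by (simp add: power2_eq_square)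

lemma strong_Q_meas:
  assumes U: "usual_hypotheses M F" and sq: "strong_qv M F t V Q" and t: "t > 0"
  shows "Q t \<in> borel_measurable M"
  using sq adapted_meas[OF U, of t Q t] t unfolding strong_qv_def strong_cov_def fv_process_def by auto

theorem mainTheorem2:
  fixes M :: "'a measure" and F :: "real \<Rightarrow> 'a measure" and t :: real
    and f :: "real \<Rightarrow> real"
    and X :: "real \<Rightarrow> 'a \<Rightarrow> real" and Xn :: "nat \<Rightarrow> real \<Rightarrow> 'a \<Rightarrow> real"
  assumes "prob_space M"
    and "usual_hypotheses M F"
    and "t > 0"
    and "f C1_differentiable_on UNIV"
    and "cadlag_process M t X" and "adapted F t X"
    and "\<And>n. cadlag_process M t (Xn n)" and "\<And>n. adapted F t (Xn n)"
    and "conv_prob_zero M (\<lambda>n. sup_abs t (\<lambda>s \<omega>. Xn n s \<omega> - X s \<omega>))"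
  shows
    "(\<forall>D QD QF.
        refining_sequence t D \<and>
        (\<exists>Q. weak_qv M t D X Q) \<and> (\<forall>n. \<exists>Q. weak_qv M t D (Xn n) Q) \<and>
        (\<forall>n. weak_qv M t D (\<lambda>s \<omega>. Xn n s \<omega> - X s \<omega>) (QD n)) \<and>
        (\<forall>n. weak_qv M t D (\<lambda>s \<omega>. f (Xn n s \<omega>) - f (X s \<omega>)) (QF n)) \<and>
        conv_prob_zero M (\<lambda>n. QD n t)
      \<longrightarrow> conv_prob_zero M (\<lambda>n. QF n t))
   \<and>
    (\<forall>QD QF.
        (\<exists>Q. strong_qv M F t X Q) \<and> (\<forall>n. \<exists>Q. strong_qv M F t (Xn n) Q) \<and>
        (\<forall>n. strong_qv M F t (\<lambda>s \<omega>. Xn n s \<omega> - X s \<omega>) (QD n)) \<and>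
        (\<forall>n. strong_qv M F t (\<lambda>s \<omega>. f (Xn n s \<omega>) - f (X s \<omega>)) (QF n)) \<and>
        conv_prob_zero M (\<lambda>n. QD n t)
      \<longrightarrow> conv_prob_zero M (\<lambda>n. QF n t))"
proof -
  note P = assms(1) and U = assms(2) and t = assms(3) and C1 = assms(4)
  interpret prob_space M by (rule P)
  have fc: "continuous_on UNIV f" using C1 by (rule C1_differentiable_imp_continuous_on)
  define Y where "Y = (\<lambda>n s \<omega>. Xn n s \<omega> - X s \<omega>)"
  define Z where "Z = (\<lambda>n s \<omega>. f (Xn n s \<omega>) - f (X s \<omega>))"
  have Xrc: "rcb t (\<lambda>s. X s \<omega>)" if "\<omega> \<in> space M" for \<omega>
    using assms(5) that unfolding cadlag_process_def by (auto intro: cadlag_rcb)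
  have Xnrc: "rcb t (\<lambda>s. Xn n s \<omega>)" if "\<omega> \<in> space M" for n \<omega>
    using assms(7)[of n] that unfolding cadlag_process_def by (auto intro: cadlag_rcb)
  have Yrc: "rcb t (\<lambda>s. Y n s \<omega>)" if "\<omega> \<in> space M" for n \<omega>
    unfolding Y_def using Xrc[OF that] Xnrc[OF that] by (intro rcb_diff) auto
  have Zrc: "rcb t (\<lambda>s. Z n s \<omega>)" if "\<omega> \<in> space M" for n \<omega>
    unfolding Z_def using Xrc[OF that] Xnrc[OF that] by (intro rcb_diff rcb_comp[OF fc]) auto
  have Xm: "X s \<in> borel_measurable M" if "s \<in> {0..t}" for s using adapted_meas[OF U assms(6) that] .
  have Xnm: "Xn n s \<in> borel_measurable M" if "s \<in> {0..t}" for n s using adapted_meas[OF U assms(8) that] .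
  have Ym: "Y n s \<in> borel_measurable M" if "s \<in> {0..t}" for n s
    unfolding Y_def using Xm[OF that] Xnm[OF that] by (intro borel_measurable_diff) auto
  have Zm: "Z n s \<in> borel_measurable M" if "s \<in> {0..t}" for n s
    unfolding Z_def using Xm[OF that] Xnm[OF that]
    by (intro borel_measurable_diff borel_measurable_continuous_on[OF fc]) auto
  have Xse: "{\<omega>\<in>space M. sup_abs t X \<omega> > K} \<in> sets M" for K
    using t Xrc Xm by (intro sup_event) auto
  have Yse: "{\<omega>\<in>space M. sup_abs t (Y n) \<omega> > r} \<in> sets M" for n r
    using t Yrc Ym by (intro sup_event) auto
  have Ysc: "(\<lambda>n. measure M {\<omega>\<in>space M. sup_abs t (Y n) \<omega> > r}) \<longlonglongrightarrow> 0" if r: "r > 0" for r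
  proof -
    have "(\<lambda>n. measure M {\<omega>\<in>space M. \<bar>sup_abs t (Y n) \<omega>\<bar> > r}) \<longlonglongrightarrow> 0"
      using assms(9) r unfolding conv_prob_zero_def Y_def by blast
    moreover have "{\<omega>\<in>space M. \<bar>sup_abs t (Y n) \<omega>\<bar> > r} = {\<omega>\<in>space M. sup_abs t (Y n) \<omega> > r}" for n
    proof -
      have "\<And>\<omega>. \<omega> \<in> space M \<Longrightarrow> 0 \<le> sup_abs t (Y n) \<omega>"
        using sup_abs_nonneg[where Y="Y n"] Yrc t by auto
      thus ?thesis by auto
    qed
    ultimately show ?thesis by simp
  qed
  have bnd: "\<bar>X s \<omega>\<bar> \<le> K \<and> \<bar>Y n s \<omega>\<bar> \<le> \<rho>"
    if "\<omega> \<in> space M" "sup_abs t X \<omega> \<le> K" "sup_abs t (Y n) \<omega> \<le> \<rho>" "s \<in> {0..t}" for \<omega> K \<rho> n s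
    using sup_abs_ge[where Y=X, OF Xrc[OF that(1)] that(4)] sup_abs_ge[where Y="Y n", OF Yrc[OF that(1)] that(4)] that(2,3)
    by auto
  have Zeq: "f (X s \<omega> + Y n s \<omega>) - f (X s \<omega>) = Z n s \<omega>" for n s \<omega>
    unfolding Y_def Z_def by simp
  have fK: "\<forall>K>0. \<exists>A>0. \<forall>B>0. \<exists>\<rho>>0. \<forall>xa xb ya yb. \<bar>xa\<bar> \<le> K \<and> \<bar>xb\<bar> \<le> K \<and> \<bar>ya\<bar> \<le> \<rho> \<and> \<bar>yb\<bar> \<le> \<rho> \<longrightarrow>
      (f (xb + yb) - f xb - (f (xa + ya) - f xa))\<^sup>2 \<le> A * (yb - ya)\<^sup>2 + B * (xb - xa)\<^sup>2"
    using f_constants[OF C1] by blast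
  show ?thesis
  proof (rule conjI)
    show "\<forall>D QD QF.
        refining_sequence t D \<and>
        (\<exists>Q. weak_qv M t D X Q) \<and> (\<forall>n. \<exists>Q. weak_qv M t D (Xn n) Q) \<and>
        (\<forall>n. weak_qv M t D (\<lambda>s \<omega>. Xn n s \<omega> - X s \<omega>) (QD n)) \<and>
        (\<forall>n. weak_qv M t D (\<lambda>s \<omega>. f (Xn n s \<omega>) - f (X s \<omega>)) (QF n)) \<and>
        conv_prob_zero M (\<lambda>n. QD n t)
      \<longrightarrow> conv_prob_zero M (\<lambda>n. QF n t)"
    proof (intro allI impI)
      fix D QD QF
      assume h: "refining_sequence t D \<and>
        (\<exists>Q. weak_qv M t D X Q) \<and> (\<forall>n. \<exists>Q. weak_qv M t D (Xn n) Q) \<and>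
        (\<forall>n. weak_qv M t D (\<lambda>s \<omega>. Xn n s \<omega> - X s \<omega>) (QD n)) \<and>
        (\<forall>n. weak_qv M t D (\<lambda>s \<omega>. f (Xn n s \<omega>) - f (X s \<omega>)) (QF n)) \<and>
        conv_prob_zero M (\<lambda>n. QD n t)"
      have part: "is_partition t (D k)" for k using h unfolding refining_sequence_def by blast
      obtain Q where wX: "weak_qv M t D X Q" using h by blast
      have wY: "weak_qv M t D (Y n) (QD n)" for n using h unfolding Y_def by blast
      have wZ: "weak_qv M t D (Z n) (QF n)" for n using h unfolding Z_def by blast
      have Dc: "conv_prob_zero M (\<lambda>n. QD n t)" using h by blast
      have tt: "t \<in> {0..t}" "t \<in> {0<..t}" using t by auto
      have wm: "Q' t \<in> borel_measurable M" and wc: "conv_prob_zero M (\<lambda>k \<omega>. discrete_qv t (D k) V t \<omega> - Q' t \<omega>)"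
        if "weak_qv M t D V Q'" for V Q'
        using that tt unfolding weak_qv_def by blast+
      show "conv_prob_zero M (\<lambda>n. QF n t)"
      proof (rule prob_main[OF P _ _ _ Xse Yse Ysc Dc])
        show "\<And>n. QF n t \<in> borel_measurable M" using wm[OF wZ] .
        show "\<And>n. QD n t \<in> borel_measurable M" using wm[OF wY] .
        show "Q t \<in> borel_measurable M" using wm[OF wX] .
        show "\<forall>K>0. \<exists>A>0. \<forall>B>0. \<exists>\<rho>>0. approx_ok M (\<lambda>n. QF n t) (\<lambda>n. QD n t) (Q t) (sup_abs t X) (\<lambda>n. sup_abs t (Y n)) K A B \<rho>"
        proof (intro allI impI)
          fix K :: real assume K: "K > 0"
          from fK[rule_format, OF K] obtain A where A: "A > 0" and HA: "\<forall>B>0. \<exists>\<rho>>0. \<forall>xa xb ya yb. \<bar>xa\<bar> \<le> K \<and> \<bar>xb\<bar> \<le> K \<and> \<bar>ya\<bar> \<le> \<rho> \<and> \<bar>yb\<bar> \<le> \<rho> \<longrightarrow>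
            (f (xb + yb) - f xb - (f (xa + ya) - f xa))\<^sup>2 \<le> A * (yb - ya)\<^sup>2 + B * (xb - xa)\<^sup>2" by blast
          show "\<exists>A>0. \<forall>B>0. \<exists>\<rho>>0. approx_ok M (\<lambda>n. QF n t) (\<lambda>n. QD n t) (Q t) (sup_abs t X) (\<lambda>n. sup_abs t (Y n)) K A B \<rho>"
          proof (rule exI[of _ A], intro conjI A allI impI)
            fix B :: real assume B: "B > 0"
            from HA[rule_format, OF B] obtain \<rho> where \<rho>: "\<rho> > 0" and H\<rho>: "\<forall>xa xb ya yb. \<bar>xa\<bar> \<le> K \<and> \<bar>xb\<bar> \<le> K \<and> \<bar>ya\<bar> \<le> \<rho> \<and> \<bar>yb\<bar> \<le> \<rho> \<longrightarrow>
            (f (xb + yb) - f xb - (f (xa + ya) - f xa))\<^sup>2 \<le> A * (yb - ya)\<^sup>2 + B * (xb - xa)\<^sup>2" by blast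
            show "\<exists>\<rho>>0. approx_ok M (\<lambda>n. QF n t) (\<lambda>n. QD n t) (Q t) (sup_abs t X) (\<lambda>n. sup_abs t (Y n)) K A B \<rho>"
            proof (rule exI[of _ \<rho>], intro conjI \<rho>)
              show "approx_ok M (\<lambda>n. QF n t) (\<lambda>n. QD n t) (Q t) (sup_abs t X) (\<lambda>n. sup_abs t (Y n)) K A B \<rho>"
                unfolding approx_ok_def
              proof (intro allI impI)
                fix n :: nat and e h :: real assume e: "e > 0" and hh: "h > 0"
                have ev: "eventually (\<lambda>k. measure M {\<omega>\<in>space M. \<bar>discrete_qv t (D k) V t \<omega> - Q' t \<omega>\<bar> > e} < h) sequentially"
                  if "weak_qv M t D V Q'" for V Q'
                proof -
                  have "(\<lambda>k. measure M {\<omega>\<in>space M. \<bar>discrete_qv t (D k) V t \<omega> - Q' t \<omega>\<bar> > e}) \<longlonglongrightarrow> 0"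
                    using wc[OF that] e unfolding conv_prob_zero_def by blast
                  thus ?thesis using hh by (rule order_tendstoD)
                qed
                have "eventually (\<lambda>k. measure M {\<omega>\<in>space M. \<bar>discrete_qv t (D k) (Z n) t \<omega> - QF n t \<omega>\<bar> > e} < h
                   \<and> measure M {\<omega>\<in>space M. \<bar>discrete_qv t (D k) (Y n) t \<omega> - QD n t \<omega>\<bar> > e} < h
                   \<and> measure M {\<omega>\<in>space M. \<bar>discrete_qv t (D k) X t \<omega> - Q t \<omega>\<bar> > e} < h) sequentially"
                  by (intro eventually_conj ev wZ wY wX)
                then obtain k where k: "measure M {\<omega>\<in>space M. \<bar>discrete_qv t (D k) (Z n) t \<omega> - QF n t \<omega>\<bar> > e} < h"
                   "measure M {\<omega>\<in>space M. \<bar>discrete_qv t (D k) (Y n) t \<omega> - QD n t \<omega>\<bar> > e} < h"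
                   "measure M {\<omega>\<in>space M. \<bar>discrete_qv t (D k) X t \<omega> - Q t \<omega>\<bar> > e} < h"
                  unfolding eventually_sequentially by blast
                define I where "I = {x\<in>D k. x \<le> t \<and> x < t}"
                have Ipts: "x \<in> {0..t} \<and> succ_pt (D k) x \<in> {0..t}" if "x \<in> I" for x
                proof -
                  have "succ_pt (D k) x \<in> D k" using succ_pt_in[OF part] that unfolding I_def by auto
                  thus ?thesis using part[of k] that unfolding is_partition_def I_def by auto
                qed
                have pw: "discrete_qv t (D k) (Z n) t \<omega> \<le> A * discrete_qv t (D k) (Y n) t \<omega> + B * discrete_qv t (D k) X t \<omega>"
                  if w: "\<omega> \<in> space M" "sup_abs t X \<omega> \<le> K" "sup_abs t (Y n) \<omega> \<le> \<rho>" for \<omega>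
                  using pw_sum[OF H\<rho>, where I=I and p="\<lambda>x. x" and q="succ_pt (D k)" and t=t and x="\<lambda>s. X s \<omega>" and y="\<lambda>s. Y n s \<omega>"] Ipts bnd[OF w]
                  unfolding discrete_qv_def I_def[symmetric] Zeq by auto
                show "\<exists>SZ SY SX. SZ \<in> borel_measurable M \<and> SY \<in> borel_measurable M \<and> SX \<in> borel_measurable M \<and>
                  (\<forall>\<omega>\<in>space M. 0 \<le> SZ \<omega>) \<and>
                  measure M {\<omega>\<in>space M. \<bar>SZ \<omega> - QF n t \<omega>\<bar> > e} \<le> h \<and>
                  measure M {\<omega>\<in>space M. \<bar>SY \<omega> - QD n t \<omega>\<bar> > e} \<le> h \<and>
                  measure M {\<omega>\<in>space M. \<bar>SX \<omega> - Q t \<omega>\<bar> > e} \<le> h \<and>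
                  (\<forall>\<omega>\<in>space M. sup_abs t X \<omega> \<le> K \<longrightarrow> sup_abs t (Y n) \<omega> \<le> \<rho> \<longrightarrow> SZ \<omega> \<le> A * SY \<omega> + B * SX \<omega>)"
                proof (intro exI conjI ballI impI)
                  show "(\<lambda>\<omega>. discrete_qv t (D k) (Z n) t \<omega>) \<in> borel_measurable M"
                    using part Zm by (rule discrete_qv_meas)
                  show "(\<lambda>\<omega>. discrete_qv t (D k) (Y n) t \<omega>) \<in> borel_measurable M"
                    using part Ym by (rule discrete_qv_meas)
                  show "(\<lambda>\<omega>. discrete_qv t (D k) X t \<omega>) \<in> borel_measurable M"
                    using part Xm by (rule discrete_qv_meas)
                  show "0 \<le> discrete_qv t (D k) (Z n) t \<omega>" for \<omega>
                    unfolding discrete_qv_def by (intro sum_nonneg) auto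
                  show "measure M {\<omega>\<in>space M. \<bar>discrete_qv t (D k) (Z n) t \<omega> - QF n t \<omega>\<bar> > e} \<le> h" using k by simp
                  show "measure M {\<omega>\<in>space M. \<bar>discrete_qv t (D k) (Y n) t \<omega> - QD n t \<omega>\<bar> > e} \<le> h" using k by simp
                  show "measure M {\<omega>\<in>space M. \<bar>discrete_qv t (D k) X t \<omega> - Q t \<omega>\<bar> > e} \<le> h" using k by simp
                  show "discrete_qv t (D k) (Z n) t \<omega> \<le> A * discrete_qv t (D k) (Y n) t \<omega> + B * discrete_qv t (D k) X t \<omega>"
                    if "\<omega> \<in> space M" "sup_abs t X \<omega> \<le> K" "sup_abs t (Y n) \<omega> \<le> \<rho>" for \<omega>
                    using pw[OF that] .
                qed
              qed
            qed
          qed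
        qed
      qed
    qed
  next
    show "\<forall>QD QF.
        (\<exists>Q. strong_qv M F t X Q) \<and> (\<forall>n. \<exists>Q. strong_qv M F t (Xn n) Q) \<and>
        (\<forall>n. strong_qv M F t (\<lambda>s \<omega>. Xn n s \<omega> - X s \<omega>) (QD n)) \<and>
        (\<forall>n. strong_qv M F t (\<lambda>s \<omega>. f (Xn n s \<omega>) - f (X s \<omega>)) (QF n)) \<and>
        conv_prob_zero M (\<lambda>n. QD n t)
      \<longrightarrow> conv_prob_zero M (\<lambda>n. QF n t)"
    proof (intro allI impI)
      fix QD QF
      assume h: "(\<exists>Q. strong_qv M F t X Q) \<and> (\<forall>n. \<exists>Q. strong_qv M F t (Xn n) Q) \<and>
        (\<forall>n. strong_qv M F t (\<lambda>s \<omega>. Xn n s \<omega> - X s \<omega>) (QD n)) \<and>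
        (\<forall>n. strong_qv M F t (\<lambda>s \<omega>. f (Xn n s \<omega>) - f (X s \<omega>)) (QF n)) \<and>
        conv_prob_zero M (\<lambda>n. QD n t)"
      obtain Q where sX: "strong_qv M F t X Q" using h by blast
      have sY: "strong_qv M F t (Y n) (QD n)" for n using h unfolding Y_def by blast
      have sZ: "strong_qv M F t (Z n) (QF n)" for n using h unfolding Z_def by blast
      have Dc: "conv_prob_zero M (\<lambda>n. QD n t)" using h by blast
      show "conv_prob_zero M (\<lambda>n. QF n t)"
      proof (rule prob_main[OF P _ _ _ Xse Yse Ysc Dc])
        show "\<And>n. QF n t \<in> borel_measurable M" using strong_Q_meas[OF U sZ t] .
        show "\<And>n. QD n t \<in> borel_measurable M" using strong_Q_meas[OF U sY t] .
        show "Q t \<in> borel_measurable M" using strong_Q_meas[OF U sX t] .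
        show "\<forall>K>0. \<exists>A>0. \<forall>B>0. \<exists>\<rho>>0. approx_ok M (\<lambda>n. QF n t) (\<lambda>n. QD n t) (Q t) (sup_abs t X) (\<lambda>n. sup_abs t (Y n)) K A B \<rho>"
        proof (intro allI impI)
          fix K :: real assume K: "K > 0"
          from fK[rule_format, OF K] obtain A where A: "A > 0" and HA: "\<forall>B>0. \<exists>\<rho>>0. \<forall>xa xb ya yb. \<bar>xa\<bar> \<le> K \<and> \<bar>xb\<bar> \<le> K \<and> \<bar>ya\<bar> \<le> \<rho> \<and> \<bar>yb\<bar> \<le> \<rho> \<longrightarrow>
            (f (xb + yb) - f xb - (f (xa + ya) - f xa))\<^sup>2 \<le> A * (yb - ya)\<^sup>2 + B * (xb - xa)\<^sup>2" by blast
          show "\<exists>A>0. \<forall>B>0. \<exists>\<rho>>0. approx_ok M (\<lambda>n. QF n t) (\<lambda>n. QD n t) (Q t) (sup_abs t X) (\<lambda>n. sup_abs t (Y n)) K A B \<rho>"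
          proof (rule exI[of _ A], intro conjI A allI impI)
            fix B :: real assume B: "B > 0"
            from HA[rule_format, OF B] obtain \<rho> where \<rho>: "\<rho> > 0" and H\<rho>: "\<forall>xa xb ya yb. \<bar>xa\<bar> \<le> K \<and> \<bar>xb\<bar> \<le> K \<and> \<bar>ya\<bar> \<le> \<rho> \<and> \<bar>yb\<bar> \<le> \<rho> \<longrightarrow>
            (f (xb + yb) - f xb - (f (xa + ya) - f xa))\<^sup>2 \<le> A * (yb - ya)\<^sup>2 + B * (xb - xa)\<^sup>2" by blast
            show "\<exists>\<rho>>0. approx_ok M (\<lambda>n. QF n t) (\<lambda>n. QD n t) (Q t) (sup_abs t X) (\<lambda>n. sup_abs t (Y n)) K A B \<rho>"
            proof (rule exI[of _ \<rho>], intro conjI \<rho>)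
              show "approx_ok M (\<lambda>n. QF n t) (\<lambda>n. QD n t) (Q t) (sup_abs t X) (\<lambda>n. sup_abs t (Y n)) K A B \<rho>"
                unfolding approx_ok_def
              proof (intro allI impI)
                fix n :: nat and e h :: real assume e: "e > 0" and hh: "h > 0"
                obtain \<delta>1 where d1: "\<delta>1 > 0" and D1: "\<forall>N::nat. N > 0 \<and> t / real N \<le> \<delta>1 \<longrightarrow>
                  measure M {\<omega>\<in>space M. \<bar>cov_P (Z n) (Z n) N (\<lambda>i \<omega>. t * real i / real N) t \<omega> - QF n t \<omega>\<bar> > e} \<le> h"
                  using strong_approx[where V="Z n", OF P U t Zrc Zm sZ e hh] by blast
                obtain \<delta>2 where d2: "\<delta>2 > 0" and D2: "\<forall>N::nat. N > 0 \<and> t / real N \<le> \<delta>2 \<longrightarrow>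
                  measure M {\<omega>\<in>space M. \<bar>cov_P (Y n) (Y n) N (\<lambda>i \<omega>. t * real i / real N) t \<omega> - QD n t \<omega>\<bar> > e} \<le> h"
                  using strong_approx[where V="Y n", OF P U t Yrc Ym sY e hh] by blast
                obtain \<delta>3 where d3: "\<delta>3 > 0" and D3: "\<forall>N::nat. N > 0 \<and> t / real N \<le> \<delta>3 \<longrightarrow>
                  measure M {\<omega>\<in>space M. \<bar>cov_P X X N (\<lambda>i \<omega>. t * real i / real N) t \<omega> - Q t \<omega>\<bar> > e} \<le> h"
                  using strong_approx[where V=X, OF P U t Xrc Xm sX e hh] by blast
                define \<delta> where "\<delta> = min \<delta>1 (min \<delta>2 \<delta>3)"
                have d: "\<delta> > 0" unfolding \<delta>_def using d1 d2 d3 by auto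
                define N where "N = nat \<lceil>t / \<delta>\<rceil> + 1"
                have N0: "N > 0" unfolding N_def by simp
                have "t / \<delta> \<le> real N" unfolding N_def by linarith
                hence "t \<le> \<delta> * real N" using d by (simp add: divide_le_eq mult.commute)
                hence tN: "t / real N \<le> \<delta>" using N0 by (simp add: divide_le_eq mult.commute)
                have tN1: "N > 0 \<and> t / real N \<le> \<delta>1" and tN2: "N > 0 \<and> t / real N \<le> \<delta>2" and tN3: "N > 0 \<and> t / real N \<le> \<delta>3"
                  using tN N0 unfolding \<delta>_def by auto
                have c0: "0 \<le> t * real i / real N" for i using t by simp
                define I where "I = {1..N}"
                have Ipts: "min ((t * real (i - 1) / real N)) t \<in> {0..t} \<and> min ((t * real i / real N)) t \<in> {0..t}" for i
                  using c0[of i] c0[of "i - 1"] t by auto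
                have pw: "cov_P (Z n) (Z n) N (\<lambda>i \<omega>. (t * real i / real N)) t \<omega> \<le> A * cov_P (Y n) (Y n) N (\<lambda>i \<omega>. (t * real i / real N)) t \<omega> + B * cov_P X X N (\<lambda>i \<omega>. (t * real i / real N)) t \<omega>"
                  if w: "\<omega> \<in> space M" "sup_abs t X \<omega> \<le> K" "sup_abs t (Y n) \<omega> \<le> \<rho>" for \<omega>
                  using pw_sum[OF H\<rho>, where I=I and p="\<lambda>i. min ((t * real (i - 1) / real N)) t" and q="\<lambda>i. min ((t * real i / real N)) t" and t=t and x="\<lambda>s. X s \<omega>" and y="\<lambda>s. Y n s \<omega>"] Ipts bnd[OF w]
                  unfolding cov_sq I_def[symmetric] Zeq by auto
                show "\<exists>SZ SY SX. SZ \<in> borel_measurable M \<and> SY \<in> borel_measurable M \<and> SX \<in> borel_measurable M \<and>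
                  (\<forall>\<omega>\<in>space M. 0 \<le> SZ \<omega>) \<and>
                  measure M {\<omega>\<in>space M. \<bar>SZ \<omega> - QF n t \<omega>\<bar> > e} \<le> h \<and>
                  measure M {\<omega>\<in>space M. \<bar>SY \<omega> - QD n t \<omega>\<bar> > e} \<le> h \<and>
                  measure M {\<omega>\<in>space M. \<bar>SX \<omega> - Q t \<omega>\<bar> > e} \<le> h \<and>
                  (\<forall>\<omega>\<in>space M. sup_abs t X \<omega> \<le> K \<longrightarrow> sup_abs t (Y n) \<omega> \<le> \<rho> \<longrightarrow> SZ \<omega> \<le> A * SY \<omega> + B * SX \<omega>)"
                proof (intro exI conjI ballI impI)
                  show "(\<lambda>\<omega>. cov_P (Z n) (Z n) N (\<lambda>i \<omega>. (t * real i / real N)) t \<omega>) \<in> borel_measurable M"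
                    using Zm c0 t by (intro cov_meas) auto
                  show "(\<lambda>\<omega>. cov_P (Y n) (Y n) N (\<lambda>i \<omega>. (t * real i / real N)) t \<omega>) \<in> borel_measurable M"
                    using Ym c0 t by (intro cov_meas) auto
                  show "(\<lambda>\<omega>. cov_P X X N (\<lambda>i \<omega>. (t * real i / real N)) t \<omega>) \<in> borel_measurable M"
                    using Xm c0 t by (intro cov_meas) auto
                  show "0 \<le> cov_P (Z n) (Z n) N (\<lambda>i \<omega>. (t * real i / real N)) t \<omega>" for \<omega>
                    unfolding cov_sq by (intro sum_nonneg) auto
                  show "measure M {\<omega>\<in>space M. \<bar>cov_P (Z n) (Z n) N (\<lambda>i \<omega>. (t * real i / real N)) t \<omega> - QF n t \<omega>\<bar> > e} \<le> h"
                    using D1[rule_format, OF tN1] .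
                  show "measure M {\<omega>\<in>space M. \<bar>cov_P (Y n) (Y n) N (\<lambda>i \<omega>. (t * real i / real N)) t \<omega> - QD n t \<omega>\<bar> > e} \<le> h"
                    using D2[rule_format, OF tN2] .
                  show "measure M {\<omega>\<in>space M. \<bar>cov_P X X N (\<lambda>i \<omega>. (t * real i / real N)) t \<omega> - Q t \<omega>\<bar> > e} \<le> h"
                    using D3[rule_format, OF tN3] .
                  show "cov_P (Z n) (Z n) N (\<lambda>i \<omega>. (t * real i / real N)) t \<omega> \<le> A * cov_P (Y n) (Y n) N (\<lambda>i \<omega>. (t * real i / real N)) t \<omega> + B * cov_P X X N (\<lambda>i \<omega>. (t * real i / real N)) t \<omega>"
                    if "\<omega> \<in> space M" "sup_abs t X \<omega> \<le> K" "sup_abs t (Y n) \<omega> \<le> \<rho>" for \<omega>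
                    using pw[OF that] .
                qed
              qed
            qed
          qed
        qed
      qed
    qed
  qed
qed

end
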